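(* Let $k\ge l\ge0$. The projection operator $\Pi=\sum_{i,j\ge0}\beta_{i,j}(k,l)\,C^iS_u^jA^iS_x^j$ from $\mathcal{P}_{k,l}(\mathbb{R}^{2m},\mathbb{C})\cap\ker(\Delta_x,\Delta_u)$ onto $\mathcal{H}_{k,l}(\mathbb{R}^{2m},\mathbb{C})$, with $$\beta_{i,j}(k,l)=\frac{(-1)^{i+j}}{i!\,j!}\,\frac{(k+\frac m2-i+j-1)\,(l+\frac m2-j-3)_{(i)}}{(k+\frac m2+j-1)\,(l+\frac m2-3)_{(i)}\,(k+l+m-4)_{(i)}\,(k-l+2)^{(j)}},$$ is self-adjoint with respect to the Fischer inner product.
   Context: Fix an integer $m>4$. For $x,u\in\mathbb{R}^m$ let $\mathcal{P}_{p,q}(\mathbb{R}^{2m},\mathbb{C})$ be complex polynomials of degree $p$ in $x$ and $q$ in $u$. The Fischer inner product is $[P,Q]_F=\overline{P}(\partial_x,\partial_u)Q(x,u)\big|_{x=u=0}$ ($\overline{P}(\partial_x,\partial_u)$: conjugate coefficients of $P$ and replace $x_j,u_j$ by $\partial_{x_j},\partial_{u_j}$). Write $|x|^2=\sum x_j^2$, $\langle u,x\rangle=\sum u_jx_j$, $\Delta_x=\sum\partial_{x_j}^2$, $\Delta_u=\sum\partial_{u_j}^2$, $\langle\partial_u,\partial_x\rangle=\sum\partial_{u_j}\partial_{x_j}$, $\langle x,\partial_u\rangle=\sum x_j\partial_{u_j}$, $\langle u,\partial_x\rangle=\sum u_j\partial_{x_j}$, $\ker(D_1,\dots,D_r)=\bigcap\ker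 D_i$. Every $P\in\mathcal{P}_{p,q}$ is uniquely $\sum_{a,b\ge0}|x|^{2a}|u|^{2b}H'_{p-2a,q-2b}$ with $H'_{p-2a,q-2b}\in\mathcal{P}_{p-2a,q-2b}\cap\ker(\Delta_x,\Delta_u)$; $\pi_{\mathfrak{s}}P:=H'_{p,q}$. On $\ker(\Delta_x,\Delta_u)$: $S_x=\pi_{\mathfrak{s}}\langle x,\partial_u\rangle$, $S_u=\pi_{\mathfrak{s}}\langle u,\partial_x\rangle$, $A=\pi_{\mathfrak{s}}\langle\partial_u,\partial_x\rangle$, $C=\pi_{\mathfrak{s}}\langle u,x\rangle$. $\mathcal{H}_{k,l}=\mathcal{P}_{k,l}\cap\ker(\Delta_x,\Delta_u,\langle\partial_u,\partial_x\rangle,\langle x,\partial_u\rangle)$. Rising factorial $\alpha^{(j)}=\alpha(\alpha+1)\cdots(\alpha+j-1)$, falling $\alpha_{(j)}=\alpha(\alpha-1)\cdots(\alpha-j+1)$, both $1$ for $j=0$. *)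

theory Defs
  imports Complex_Main "HOL-Library.Poly_Mapping"
begin

text \<open>Complex polynomials in the 2m real variables x_1..x_m, u_1..u_m.
  Variable x_j (j<m) has index j, variable u_j has index m+j.
  A monomial is a finitely supported exponent vector nat =>0 nat.\<close>

type_synonym cpoly = "(nat \<Rightarrow>\<^sub>0 nat) \<Rightarrow>\<^sub>0 complex"

definition pvar :: "nat \<Rightarrow> cpoly" where
  "pvar i = Poly_Mapping.single (Poly_Mapping.single i 1) 1"

definition pconst :: "complex \<Rightarrow> cpoly" where
  "pconst c = Poly_Mapping.single 0 c"

definition pdiff :: "nat \<Rightarrow> cpoly \<Rightarrow> cpoly" where
  "pdiff i P = (\<Sum>\<alpha>\<in>Poly_Mapping.keys P. Poly_Mapping.single (\<alpha> - Poly_Mapping.single i 1)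
                     (of_nat (Poly_Mapping.lookup (\<alpha>::nat \<Rightarrow>\<^sub>0 nat) i) * Poly_Mapping.lookup P \<alpha>))"

definition diff_mono :: "(nat \<Rightarrow>\<^sub>0 nat) \<Rightarrow> cpoly \<Rightarrow> cpoly" where
  "diff_mono \<alpha> Q = foldr (\<lambda>i. pdiff i ^^ Poly_Mapping.lookup \<alpha> i) (sorted_list_of_set (Poly_Mapping.keys \<alpha>)) Q"

definition fischer :: "cpoly \<Rightarrow> cpoly \<Rightarrow> complex" where
  "fischer P Q = Poly_Mapping.lookup (\<Sum>\<alpha>\<in>Poly_Mapping.keys P. Poly_Mapping.single 0 (cnj (Poly_Mapping.lookup P \<alpha>)) * diff_mono \<alpha> Q) 0"

definition Pspace :: "nat \<Rightarrow> nat \<Rightarrow> nat \<Rightarrow> cpoly set" where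
  "Pspace m p q = {P. \<forall>\<alpha>\<in>Poly_Mapping.keys P. Poly_Mapping.keys \<alpha> \<subseteq> {..<2*m}
        \<and> (\<Sum>j<m. Poly_Mapping.lookup \<alpha> j) = p \<and> (\<Sum>j<m. Poly_Mapping.lookup \<alpha> (m+j)) = q}"

definition normx2 :: "nat \<Rightarrow> cpoly" where "normx2 m = (\<Sum>j<m. pvar j ^ 2)"
definition normu2 :: "nat \<Rightarrow> cpoly" where "normu2 m = (\<Sum>j<m. pvar (m+j) ^ 2)"
definition ux :: "nat \<Rightarrow> cpoly" where "ux m = (\<Sum>j<m. pvar (m+j) * pvar j)"

definition Lap_x :: "nat \<Rightarrow> cpoly \<Rightarrow> cpoly" where
  "Lap_x m P = (\<Sum>j<m. pdiff j (pdiff j P))"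
definition Lap_u :: "nat \<Rightarrow> cpoly \<Rightarrow> cpoly" where
  "Lap_u m P = (\<Sum>j<m. pdiff (m+j) (pdiff (m+j) P))"
definition du_dx :: "nat \<Rightarrow> cpoly \<Rightarrow> cpoly" where
  "du_dx m P = (\<Sum>j<m. pdiff (m+j) (pdiff j P))"
definition x_du :: "nat \<Rightarrow> cpoly \<Rightarrow> cpoly" where
  "x_du m P = (\<Sum>j<m. pvar j * pdiff (m+j) P)"
definition u_dx :: "nat \<Rightarrow> cpoly \<Rightarrow> cpoly" where
  "u_dx m P = (\<Sum>j<m. pvar (m+j) * pdiff j P)"

definition harm :: "nat \<Rightarrow> cpoly set" where
  "harm m = {P. Lap_x m P = 0 \<and> Lap_u m P = 0}"

definition pi_s :: "nat \<Rightarrow> nat \<Rightarrow> nat \<Rightarrow> cpoly \<Rightarrow> cpoly" where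
  "pi_s m p q P = (THE H. \<exists>Hs :: nat \<Rightarrow> nat \<Rightarrow> cpoly.
      (\<forall>a\<le>p div 2. \<forall>b\<le>q div 2. Hs a b \<in> Pspace m (p - 2*a) (q - 2*b) \<inter> harm m)
      \<and> P = (\<Sum>a\<le>p div 2. \<Sum>b\<le>q div 2. normx2 m ^ a * normu2 m ^ b * Hs a b)
      \<and> H = Hs 0 0)"

definition S_x :: "nat \<Rightarrow> nat \<Rightarrow> nat \<Rightarrow> cpoly \<Rightarrow> cpoly" where
  "S_x m p q P = pi_s m (p+1) (q-1) (x_du m P)"
definition S_u :: "nat \<Rightarrow> nat \<Rightarrow> nat \<Rightarrow> cpoly \<Rightarrow> cpoly" where
  "S_u m p q P = pi_s m (p-1) (q+1) (u_dx m P)"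
definition A_op :: "nat \<Rightarrow> nat \<Rightarrow> nat \<Rightarrow> cpoly \<Rightarrow> cpoly" where
  "A_op m p q P = pi_s m (p-1) (q-1) (du_dx m P)"
definition C_op :: "nat \<Rightarrow> nat \<Rightarrow> nat \<Rightarrow> cpoly \<Rightarrow> cpoly" where
  "C_op m p q P = pi_s m (p+1) (q+1) (ux m * P)"

text \<open>Iterates, tracking the bidegree: input of bidegree (p,q).\<close>
fun S_x_pow :: "nat \<Rightarrow> nat \<Rightarrow> nat \<Rightarrow> nat \<Rightarrow> cpoly \<Rightarrow> cpoly" where
  "S_x_pow m 0 p q P = P"
| "S_x_pow m (Suc n) p q P = S_x m (p+n) (q-n) (S_x_pow m n p q P)"
fun S_u_pow :: "nat \<Rightarrow> nat \<Rightarrow> nat \<Rightarrow> nat \<Rightarrow> cpoly \<Rightarrow> cpoly" where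
  "S_u_pow m 0 p q P = P"
| "S_u_pow m (Suc n) p q P = S_u m (p-n) (q+n) (S_u_pow m n p q P)"
fun A_pow :: "nat \<Rightarrow> nat \<Rightarrow> nat \<Rightarrow> nat \<Rightarrow> cpoly \<Rightarrow> cpoly" where
  "A_pow m 0 p q P = P"
| "A_pow m (Suc n) p q P = A_op m (p-n) (q-n) (A_pow m n p q P)"
fun C_pow :: "nat \<Rightarrow> nat \<Rightarrow> nat \<Rightarrow> nat \<Rightarrow> cpoly \<Rightarrow> cpoly" where
  "C_pow m 0 p q P = P"
| "C_pow m (Suc n) p q P = C_op m (p+n) (q+n) (C_pow m n p q P)"

definition rising :: "real \<Rightarrow> nat \<Rightarrow> real" where
  "rising a j = (\<Prod>t<j. a + real t)"
definition falling :: "real \<Rightarrow> nat \<Rightarrow> real" where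
  "falling a j = (\<Prod>t<j. a - real t)"

definition beta :: "nat \<Rightarrow> nat \<Rightarrow> nat \<Rightarrow> nat \<Rightarrow> nat \<Rightarrow> real" where
  "beta m k l i j =
     (-1) ^ (i+j) / (fact i * fact j) *
     ((real k + real m / 2 - real i + real j - 1) * falling (real l + real m / 2 - real j - 3) i)
     / ((real k + real m / 2 + real j - 1) * falling (real l + real m / 2 - 3) i
        * falling (real k + real l + real m - 4) i * rising (real k - real l + 2) j)"

text \<open>Terms with i > l or j > l vanish (S_x^j A^i kills bidegree (k,l) once i+j > l),
  so the sum is taken over i,j \<le> l.\<close>
definition Proj :: "nat \<Rightarrow> nat \<Rightarrow> nat \<Rightarrow> cpoly \<Rightarrow> cpoly" where
  "Proj m k l P = (\<Sum>i\<le>l. \<Sum>j\<le>l.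
      Poly_Mapping.single 0 (complex_of_real (beta m k l i j)) *
      C_pow m i (k-i) (l-i)
        (S_u_pow m j (k+j-i) (l-j-i)
          (A_pow m i (k+j) (l-j)
            (S_x_pow m j k l P))))"

end

theory Submission
  imports Defs
begin

abbreviation ee :: "nat \<Rightarrow> (nat \<Rightarrow>\<^sub>0 nat)" where "ee i \<equiv> Poly_Mapping.single i 1"

lemma lookup_single_mult:
  "Poly_Mapping.lookup (Poly_Mapping.single a c * (g::cpoly)) k =
    (if (\<exists>q. k = a + q) then c * Poly_Mapping.lookup g (k - a) else 0)"
proof -
  have "Poly_Mapping.lookup (Poly_Mapping.single a c * g) k =
     (\<Sum>l. (c when a = l) * (\<Sum>q. Poly_Mapping.lookup g q when k = l + q))"
    by (simp add: lookup_mult lookup_single)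
  also have "\<dots> = c * (\<Sum>q. Poly_Mapping.lookup g q when k = a + q)"
    by (simp add: when_mult)
  also have "\<dots> = (if (\<exists>q. k = a + q) then c * Poly_Mapping.lookup g (k - a) else 0)"
  proof (cases "\<exists>q. k = a + q")
    case True
    then obtain q0 where q0: "k = a + q0" by blast
    have "(\<Sum>q. Poly_Mapping.lookup g q when k = a + q) = (\<Sum>q. Poly_Mapping.lookup g q when q = q0)"
      using q0 by (intro Sum_any.cong) (auto simp: when_def)
    then show ?thesis using q0 True by simp
  next
    case False
    then show ?thesis by (simp add: when_def)
  qed
  finally show ?thesis .
qed

lemma ex_add_ee: "(\<exists>q. (k::nat\<Rightarrow>\<^sub>0nat) = ee j + q) \<longleftrightarrow> 1 \<le> Poly_Mapping.lookup k j"
proof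
  assume "\<exists>q. k = ee j + q" then show "1 \<le> Poly_Mapping.lookup k j"
    by (auto simp: lookup_add lookup_single)
next
  assume a: "1 \<le> Poly_Mapping.lookup k j"
  have "k = ee j + (k - ee j)"
    by (rule poly_mapping_eqI) (use a in \<open>auto simp: lookup_add lookup_minus lookup_single when_def\<close>)
  then show "\<exists>q. k = ee j + q" by blast
qed

lemma lookup_pvar_mult:
  "Poly_Mapping.lookup (pvar j * P) k =
    (if 1 \<le> Poly_Mapping.lookup k j then Poly_Mapping.lookup P (k - ee j) else 0)"
  unfolding pvar_def lookup_single_mult ex_add_ee by simp

lemma lookup_sc: "Poly_Mapping.lookup (Poly_Mapping.single 0 c * (P::cpoly)) k = c * Poly_Mapping.lookup P k"
  unfolding lookup_single_mult by simp

lemma lookup_pdiff: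
  "Poly_Mapping.lookup (pdiff i P) k = of_nat (Poly_Mapping.lookup k i + 1) * Poly_Mapping.lookup P (k + ee i)"
proof -
  define f where "f \<alpha> = of_nat (Poly_Mapping.lookup (\<alpha>::nat\<Rightarrow>\<^sub>0nat) i) * Poly_Mapping.lookup P \<alpha>" for \<alpha>
  have "Poly_Mapping.lookup (pdiff i P) k = (\<Sum>\<alpha>\<in>Poly_Mapping.keys P. (f \<alpha> when \<alpha> - ee i = k))"
    by (simp add: pdiff_def lookup_sum lookup_single f_def)
  also have "\<dots> = (\<Sum>\<alpha>\<in>Poly_Mapping.keys P. (if \<alpha> = k + ee i then f \<alpha> else 0))"
  proof (rule sum.cong[OF refl])
    fix \<alpha> assume "\<alpha> \<in> Poly_Mapping.keys P"
    show "(f \<alpha> when \<alpha> - ee i = k) = (if \<alpha> = k + ee i then f \<alpha> else 0)"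
    proof (cases "Poly_Mapping.lookup \<alpha> i = 0")
      case True
      then have "\<alpha> \<noteq> k + ee i" by (auto simp: lookup_add)
      then show ?thesis using True by (simp add: f_def when_def)
    next
      case False
      have "(\<alpha> - ee i = k) = (\<alpha> = k + ee i)"
      proof
        assume "\<alpha> - ee i = k"
        then show "\<alpha> = k + ee i"
          by (auto intro!: poly_mapping_eqI simp: lookup_add lookup_minus lookup_single when_def)
            (use False in auto)
      next
        assume "\<alpha> = k + ee i" then show "\<alpha> - ee i = k"
          by (auto intro!: poly_mapping_eqI simp: lookup_add lookup_minus lookup_single when_def)
      qed
      then show ?thesis by (simp add: when_def)
    qed
  qed
  also have "\<dots> = f (k + ee i)"
    by (simp add: f_def in_keys_iff)
  finally show ?thesis by (simp add: f_def lookup_add)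
qed

lemma lookup_pdiff_pow:
  "Poly_Mapping.lookup ((pdiff i ^^ n) Q) k =
     pochhammer (of_nat (Poly_Mapping.lookup k i) + 1) n * Poly_Mapping.lookup Q (k + Poly_Mapping.single i n)"
proof (induction n arbitrary: k)
  case 0 then show ?case by simp
next
  case (Suc n)
  have e: "k + ee i + Poly_Mapping.single i n = k + Poly_Mapping.single i (Suc n)"
    by (rule poly_mapping_eqI) (simp add: lookup_add lookup_single when_def)
  have "Poly_Mapping.lookup ((pdiff i ^^ Suc n) Q) k = of_nat (Poly_Mapping.lookup k i + 1) *
      (pochhammer (of_nat (Poly_Mapping.lookup (k + ee i) i) + 1) n * Poly_Mapping.lookup Q (k + ee i + Poly_Mapping.single i n))"
    by (simp add: lookup_pdiff Suc.IH)
  also have "\<dots> = pochhammer (of_nat (Poly_Mapping.lookup k i) + 1) (Suc n) * Poly_Mapping.lookup Q (k + Poly_Mapping.single i (Suc n))"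
    unfolding e pochhammer_rec by (simp add: lookup_add add_ac)
  finally show ?case .
qed

lemma lookup_foldr_pdiff:
  assumes "distinct xs"
  shows "Poly_Mapping.lookup (foldr (\<lambda>i. pdiff i ^^ f i) xs Q) k =
     (\<Prod>i\<in>set xs. pochhammer (of_nat (Poly_Mapping.lookup k i) + 1) (f i)) *
      Poly_Mapping.lookup Q (k + (\<Sum>i\<in>set xs. Poly_Mapping.single i (f i)))"
  using assms
proof (induction xs arbitrary: k)
  case Nil then show ?case by simp
next
  case (Cons x xs)
  have nx: "x \<notin> set xs" and d: "distinct xs" using Cons.prems by auto
  have l: "Poly_Mapping.lookup (k + Poly_Mapping.single x (f x)) i = Poly_Mapping.lookup k i" if "i \<in> set xs" for i
    using that nx by (auto simp: lookup_add lookup_single when_def)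
  have "Poly_Mapping.lookup (foldr (\<lambda>i. pdiff i ^^ f i) (x # xs) Q) k =
      pochhammer (of_nat (Poly_Mapping.lookup k x) + 1) (f x) *
      ((\<Prod>i\<in>set xs. pochhammer (of_nat (Poly_Mapping.lookup (k + Poly_Mapping.single x (f x)) i) + 1) (f i)) *
      Poly_Mapping.lookup Q (k + Poly_Mapping.single x (f x) + (\<Sum>i\<in>set xs. Poly_Mapping.single i (f i))))"
    by (simp add: lookup_pdiff_pow Cons.IH[OF d])
  also have "\<dots> = (\<Prod>i\<in>set (x#xs). pochhammer (of_nat (Poly_Mapping.lookup k i) + 1) (f i)) *
      Poly_Mapping.lookup Q (k + (\<Sum>i\<in>set (x#xs). Poly_Mapping.single i (f i)))"
    using nx by (simp add: l add_ac)
  finally show ?case .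
qed

definition fw :: "(nat \<Rightarrow>\<^sub>0 nat) \<Rightarrow> nat" where
  "fw \<alpha> = (\<Prod>i\<in>Poly_Mapping.keys \<alpha>. fact (Poly_Mapping.lookup \<alpha> i))"

lemma sum_single_keys: "(\<Sum>i\<in>Poly_Mapping.keys \<alpha>. Poly_Mapping.single i (Poly_Mapping.lookup \<alpha> i)) = (\<alpha>::nat\<Rightarrow>\<^sub>0nat)"
  by (rule poly_mapping_eqI) (simp add: lookup_sum lookup_single when_def in_keys_iff)

lemma lookup_diff_mono0: "Poly_Mapping.lookup (diff_mono \<alpha> Q) 0 = of_nat (fw \<alpha>) * Poly_Mapping.lookup Q \<alpha>"
proof -
  have "Poly_Mapping.lookup (diff_mono \<alpha> Q) 0 =
     (\<Prod>i\<in>Poly_Mapping.keys \<alpha>. pochhammer 1 (Poly_Mapping.lookup \<alpha> i)) * Poly_Mapping.lookup Q \<alpha>"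
    unfolding diff_mono_def
    by (subst lookup_foldr_pdiff) (simp_all add: sum_single_keys)
  then show ?thesis by (simp add: fw_def pochhammer_fact[symmetric])
qed

lemma fischer_formula: "fischer P Q = (\<Sum>\<alpha>\<in>Poly_Mapping.keys P. cnj (Poly_Mapping.lookup P \<alpha>) * of_nat (fw \<alpha>) * Poly_Mapping.lookup Q \<alpha>)"
  unfolding fischer_def by (simp add: lookup_sum lookup_sc lookup_diff_mono0 mult.assoc)

lemma fischer_superset:
  assumes "finite S" "Poly_Mapping.keys P \<subseteq> S"
  shows "fischer P Q = (\<Sum>\<alpha>\<in>S. cnj (Poly_Mapping.lookup P \<alpha>) * of_nat (fw \<alpha>) * Poly_Mapping.lookup Q \<alpha>)"
  unfolding fischer_formula
  by (rule sum.mono_neutral_left) (use assms in \<open>auto simp: in_keys_iff\<close>)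

lemma fischer_conj: "fischer P Q = cnj (fischer Q P)"
proof -
  let ?S = "Poly_Mapping.keys P \<union> Poly_Mapping.keys Q"
  show ?thesis
    by (simp add: fischer_superset[of ?S P] fischer_superset[of ?S Q] mult_ac)
qed

abbreviation sc :: "complex \<Rightarrow> cpoly \<Rightarrow> cpoly" where "sc c P \<equiv> Poly_Mapping.single 0 c * P"

lemma keys_sc_sub: "Poly_Mapping.keys (sc c P) \<subseteq> Poly_Mapping.keys P"
  by (auto simp: in_keys_iff lookup_sc)

lemma fischer_add1: "fischer (P + Q) R = fischer P R + fischer Q R"
proof -
  let ?S = "Poly_Mapping.keys P \<union> Poly_Mapping.keys Q"
  have "Poly_Mapping.keys (P + Q) \<subseteq> ?S" by (rule keys_add)
  then show ?thesis
    by (simp add: fischer_superset[of ?S P] fischer_superset[of ?S Q] fischer_superset[of ?S "P+Q"]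
        lookup_add sum.distrib[symmetric] algebra_simps)
qed

lemma fischer_zero1 [simp]: "fischer 0 R = 0"
  by (simp add: fischer_formula)

lemma fischer_sc1: "fischer (sc c P) R = cnj c * fischer P R"
proof -
  have "fischer (sc c P) R = (\<Sum>\<alpha>\<in>Poly_Mapping.keys P. cnj (Poly_Mapping.lookup (sc c P) \<alpha>) * of_nat (fw \<alpha>) * Poly_Mapping.lookup R \<alpha>)"
    by (rule fischer_superset) (simp_all add: keys_sc_sub)
  also have "\<dots> = cnj c * fischer P R"
    unfolding fischer_formula[of P] lookup_sc by (simp add: sum_distrib_left mult_ac)
  finally show ?thesis .
qed

lemma fischer_uminus1: "fischer (- P) R = - fischer P R"
proof -
  have "fischer (- P) R + fischer P R = 0" by (simp flip: fischer_add1)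
  then show ?thesis by (simp add: eq_neg_iff_add_eq_0)
qed

lemma fischer_diff1: "fischer (P - Q) R = fischer P R - fischer Q R"
  using fischer_add1[of P "-Q" R] by (simp add: fischer_uminus1)

lemma fischer_sum1: "fischer (sum f I) R = (\<Sum>i\<in>I. fischer (f i) R)"
  by (induction I rule: infinite_finite_induct) (auto simp: fischer_add1)

lemma fischer_add2: "fischer R (P + Q) = fischer R P + fischer R Q"
  by (subst (1 2 3) fischer_conj) (simp add: fischer_add1)
lemma fischer_diff2: "fischer R (P - Q) = fischer R P - fischer R Q"
  by (subst (1 2 3) fischer_conj) (simp add: fischer_diff1)
lemma fischer_zero2 [simp]: "fischer R 0 = 0"
  by (subst fischer_conj) simp
lemma fischer_sc2: "fischer R (sc c P) = c * fischer R P"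
  by (subst (1 2) fischer_conj) (simp add: fischer_sc1)
lemma fischer_sum2: "fischer R (sum f I) = (\<Sum>i\<in>I. fischer R (f i))"
  by (subst fischer_conj) (simp add: fischer_sum1 fischer_conj[of R])

lemma fw_ne0 [simp]: "fw \<alpha> \<noteq> 0"
  by (simp add: fw_def)

lemma fischer_pos: "fischer P P = 0 \<Longrightarrow> P = 0"
proof -
  assume a: "fischer P P = 0"
  have eq: "fischer P P = of_real (\<Sum>\<alpha>\<in>Poly_Mapping.keys P. (cmod (Poly_Mapping.lookup P \<alpha>))^2 * real (fw \<alpha>))"
    unfolding fischer_formula of_real_sum
  proof (rule sum.cong[OF refl])
    fix \<alpha>
    have "cnj (Poly_Mapping.lookup P \<alpha>) * Poly_Mapping.lookup P \<alpha> = of_real ((cmod (Poly_Mapping.lookup P \<alpha>))^2)"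
      by (metis complex_norm_square mult.commute)
    then show "cnj (Poly_Mapping.lookup P \<alpha>) * of_nat (fw \<alpha>) * Poly_Mapping.lookup P \<alpha> =
       of_real ((cmod (Poly_Mapping.lookup P \<alpha>))^2 * real (fw \<alpha>))"
      by (metis (no_types, lifting) mult.commute mult.left_commute of_real_mult of_real_of_nat_eq)
  qed
  have s: "(\<Sum>\<alpha>\<in>Poly_Mapping.keys P. (cmod (Poly_Mapping.lookup P \<alpha>))^2 * real (fw \<alpha>)) = 0"
    using eq a by (metis of_real_eq_0_iff)
  have "\<forall>\<alpha>\<in>Poly_Mapping.keys P. (cmod (Poly_Mapping.lookup P \<alpha>))^2 * real (fw \<alpha>) = 0"
    using s by (subst sum_nonneg_eq_0_iff[symmetric]) auto
  moreover have "fw \<alpha> > 0" for \<alpha> by (simp add: fw_def)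
  ultimately show "P = 0" by (auto simp: in_keys_iff intro!: poly_mapping_eqI)
qed

lemma fw_add_ee: "fw (\<beta> + ee i) = fw \<beta> * (Poly_Mapping.lookup \<beta> i + 1)"
proof -
  have fwS: "fw \<alpha> = (\<Prod>j\<in>S. fact (Poly_Mapping.lookup \<alpha> j))" if "finite S" "Poly_Mapping.keys \<alpha> \<subseteq> S" for \<alpha> S
    unfolding fw_def by (rule prod.mono_neutral_left) (use that in \<open>auto simp: in_keys_iff\<close>)
  let ?S = "insert i (Poly_Mapping.keys \<beta>)"
  have k: "Poly_Mapping.keys (\<beta> + ee i) \<subseteq> ?S"
    using keys_add[of \<beta> "ee i"] by auto
  have "fw (\<beta> + ee i) = (\<Prod>j\<in>?S. fact (Poly_Mapping.lookup (\<beta> + ee i) j))"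
    by (rule fwS[OF _ k]) simp
  also have "\<dots> = fact (Poly_Mapping.lookup \<beta> i + 1) * (\<Prod>j\<in>?S - {i}. fact (Poly_Mapping.lookup (\<beta> + ee i) j))"
    by (subst prod.remove[of ?S i]) (simp_all add: lookup_add)
  also have "(\<Prod>j\<in>?S - {i}. fact (Poly_Mapping.lookup (\<beta> + ee i) j)) = (\<Prod>j\<in>?S - {i}. fact (Poly_Mapping.lookup \<beta> j) :: nat)"
    by (rule prod.cong) (auto simp: lookup_add lookup_single)
  finally have "fw (\<beta> + ee i) = fact (Poly_Mapping.lookup \<beta> i + 1) * (\<Prod>j\<in>?S - {i}. fact (Poly_Mapping.lookup \<beta> j))" .
  moreover have "fw \<beta> = fact (Poly_Mapping.lookup \<beta> i) * (\<Prod>j\<in>?S - {i}. fact (Poly_Mapping.lookup \<beta> j))"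
    by (subst fwS[of ?S]) (auto simp: prod.remove[of ?S i])
  ultimately show ?thesis by (simp add: algebra_simps)
qed

lemma fischer_pvar1: "fischer (pvar i * P) Q = fischer P (pdiff i Q)"
proof -
  let ?S = "(\<lambda>\<beta>. \<beta> + ee i) ` Poly_Mapping.keys P"
  have k: "Poly_Mapping.keys (pvar i * P) \<subseteq> ?S"
  proof
    fix \<alpha> assume "\<alpha> \<in> Poly_Mapping.keys (pvar i * P)"
    then have a: "1 \<le> Poly_Mapping.lookup \<alpha> i" "\<alpha> - ee i \<in> Poly_Mapping.keys P"
      by (auto simp: in_keys_iff lookup_pvar_mult split: if_splits)
    have "\<alpha> = (\<alpha> - ee i) + ee i"
      by (rule poly_mapping_eqI) (use a in \<open>auto simp: lookup_add lookup_minus lookup_single when_def\<close>)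
    with a show "\<alpha> \<in> ?S" by blast
  qed
  have inj: "inj_on (\<lambda>\<beta>. \<beta> + ee i) (Poly_Mapping.keys P)" by (auto simp: inj_on_def)
  have m: "\<beta> + ee i - ee i = \<beta>" for \<beta> :: "nat \<Rightarrow>\<^sub>0 nat"
    by (rule poly_mapping_eqI) (simp add: lookup_add lookup_minus)
  have "fischer (pvar i * P) Q = (\<Sum>\<beta>\<in>Poly_Mapping.keys P. cnj (Poly_Mapping.lookup (pvar i * P) (\<beta> + ee i)) * of_nat (fw (\<beta> + ee i)) * Poly_Mapping.lookup Q (\<beta> + ee i))"
    by (subst fischer_superset[OF _ k], simp, subst sum.reindex[OF inj], simp)
  also have "\<dots> = fischer P (pdiff i Q)"
    unfolding fischer_formula[of P]
  proof (rule sum.cong[OF refl])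
    fix \<beta>
    have "Poly_Mapping.lookup (pvar i * P) (\<beta> + ee i) = Poly_Mapping.lookup P \<beta>"
      by (simp add: lookup_pvar_mult lookup_add m)
    then show "cnj (Poly_Mapping.lookup (pvar i * P) (\<beta> + ee i)) * of_nat (fw (\<beta> + ee i)) * Poly_Mapping.lookup Q (\<beta> + ee i) =
      cnj (Poly_Mapping.lookup P \<beta>) * of_nat (fw \<beta>) * Poly_Mapping.lookup (pdiff i Q) \<beta>"
      using fw_add_ee[of \<beta> i] by (simp add: lookup_pdiff algebra_simps)
  qed
  finally show ?thesis .
qed

lemma fischer_pvar2: "fischer P (pvar i * Q) = fischer (pdiff i P) Q"
  by (subst (1 2) fischer_conj) (simp add: fischer_pvar1)

lemma pdiff_add: "pdiff i (P + Q) = pdiff i P + pdiff i Q"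
  by (rule poly_mapping_eqI) (simp add: lookup_pdiff lookup_add algebra_simps)
lemma pdiff_diff: "pdiff i (P - Q) = pdiff i P - pdiff i Q"
  by (rule poly_mapping_eqI) (simp add: lookup_pdiff lookup_minus algebra_simps)
lemma pdiff_uminus: "pdiff i (- P) = - pdiff i P"
  by (rule poly_mapping_eqI) (simp add: lookup_pdiff)
lemma pdiff_zero [simp]: "pdiff i 0 = 0"
  by (rule poly_mapping_eqI) (simp add: lookup_pdiff)
lemma pdiff_sum: "pdiff i (sum f I) = (\<Sum>x\<in>I. pdiff i (f x))"
  by (induction I rule: infinite_finite_induct) (auto simp: pdiff_add)
lemma pdiff_sc: "pdiff i (sc c P) = sc c (pdiff i P)"
  by (rule poly_mapping_eqI) (simp only: lookup_pdiff lookup_sc, (simp add: algebra_simps)?)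
lemma pdiff_comm: "pdiff i (pdiff j P) = pdiff j (pdiff i P)"
proof (rule poly_mapping_eqI)
  fix k
  show "Poly_Mapping.lookup (pdiff i (pdiff j P)) k = Poly_Mapping.lookup (pdiff j (pdiff i P)) k"
    by (cases "i = j") (simp_all add: lookup_pdiff lookup_add lookup_single add_ac mult_ac)
qed

lemma pdiff_pvar_mult_same: "pdiff i (pvar i * P) = P + pvar i * pdiff i P"
proof (rule poly_mapping_eqI)
  fix k
  have e: "k + ee i - ee i = k"
    by (rule poly_mapping_eqI) (simp add: lookup_add lookup_minus)
  have L: "Poly_Mapping.lookup (pdiff i (pvar i * P)) k = of_nat (Poly_Mapping.lookup k i + 1) * Poly_Mapping.lookup P k"
    by (simp add: lookup_pdiff lookup_pvar_mult e lookup_add)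
  show "Poly_Mapping.lookup (pdiff i (pvar i * P)) k = Poly_Mapping.lookup (P + pvar i * pdiff i P) k"
  proof (cases "1 \<le> Poly_Mapping.lookup k i")
    case c: True
    have e2: "k - ee i + ee i = k"
      by (rule poly_mapping_eqI) (use c in \<open>auto simp: lookup_add lookup_minus lookup_single when_def\<close>)
    have l: "Poly_Mapping.lookup (k - ee i) i + 1 = Poly_Mapping.lookup k i"
      using c by (simp add: lookup_minus)
    have "Poly_Mapping.lookup (P + pvar i * pdiff i P) k
        = Poly_Mapping.lookup P k + of_nat (Poly_Mapping.lookup k i) * Poly_Mapping.lookup P k"
      using c by (simp only: lookup_add lookup_pvar_mult lookup_pdiff e2 l if_True)
    with L show ?thesis by (simp add: algebra_simps)
  next
    case c: False
    then show ?thesis using L by (simp add: lookup_pvar_mult lookup_add)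
  qed
qed

lemma pdiff_pvar_mult_other: "i \<noteq> j \<Longrightarrow> pdiff i (pvar j * P) = pvar j * pdiff i P"
proof (rule poly_mapping_eqI)
  fix k assume False: "i \<noteq> j"
  have e: "k + ee i - ee j = k - ee j + ee i"
    by (rule poly_mapping_eqI) (use False in \<open>auto simp: lookup_add lookup_minus lookup_single when_def\<close>)
  show "Poly_Mapping.lookup (pdiff i (pvar j * P)) k = Poly_Mapping.lookup (pvar j * pdiff i P) k"
    using False by (simp only: lookup_pdiff lookup_pvar_mult e) (simp add: lookup_add lookup_minus lookup_single)
qed

lemma pdiff_pvar_mult: "pdiff i (pvar j * P) = (if i = j then P else 0) + pvar j * pdiff i P"
  by (cases "i = j") (simp_all add: pdiff_pvar_mult_same pdiff_pvar_mult_other)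

lemma sc_sc: "sc a (sc b P) = sc (a * b) P"
  by (simp add: mult.assoc[symmetric] mult_single)
lemma sc_add: "sc a (P + Q) = sc a P + sc a Q" by (simp add: algebra_simps)
lemma sc_one [simp]: "sc 1 P = P" by simp
lemma sc_zero [simp]: "sc 0 P = 0" by simp
lemma sc_mult_left: "sc a (Q * P) = Q * sc a P" by (simp add: mult_ac)

lemma lookup_of_nat_mult [simp]: "Poly_Mapping.lookup (of_nat n * (P::cpoly)) k = of_nat n * Poly_Mapping.lookup P k"
  using lookup_sc[of "of_nat n" P k] by simp
lemma lookup_numeral_mult [simp]: "Poly_Mapping.lookup (numeral n * (P::cpoly)) k = numeral n * Poly_Mapping.lookup P k"
  using lookup_sc[of "numeral n" P k] by simp

lemma keys_pvar_mult: "\<alpha> \<in> Poly_Mapping.keys (pvar j * P) \<Longrightarrow> \<exists>\<beta>\<in>Poly_Mapping.keys P. \<alpha> = \<beta> + ee j"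
proof -
  assume "\<alpha> \<in> Poly_Mapping.keys (pvar j * P)"
  then have a: "1 \<le> Poly_Mapping.lookup \<alpha> j" "\<alpha> - ee j \<in> Poly_Mapping.keys P"
    by (auto simp: in_keys_iff lookup_pvar_mult split: if_splits)
  have "\<alpha> = (\<alpha> - ee j) + ee j"
    by (rule poly_mapping_eqI) (use a in \<open>auto simp: lookup_add lookup_minus lookup_single when_def\<close>)
  with a show ?thesis by blast
qed

lemma keys_pdiff: "\<alpha> \<in> Poly_Mapping.keys (pdiff j P) \<Longrightarrow> \<alpha> + ee j \<in> Poly_Mapping.keys P"
  by (auto simp: in_keys_iff lookup_pdiff)

lemma sum_ee_lt: "j < m \<Longrightarrow> (\<Sum>t<m. Poly_Mapping.lookup (ee j) t) = (1::nat)"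
  by (simp add: lookup_single when_def)
lemma sum_ee_lt2: "j < m \<Longrightarrow> (\<Sum>t<m. Poly_Mapping.lookup (ee (m+j)) t) = (0::nat)"
  by (simp add: lookup_single when_def)
lemma sum_ee_ge: "j < m \<Longrightarrow> (\<Sum>t<m. Poly_Mapping.lookup (ee j) (m+t)) = (0::nat)"
  by (simp add: lookup_single when_def)
lemma sum_ee_ge2: "j < m \<Longrightarrow> (\<Sum>t<m. Poly_Mapping.lookup (ee (m+j)) (m+t)) = (1::nat)"
  by (simp add: lookup_single when_def)

lemma Pspace_zero [simp]: "0 \<in> Pspace m p q"
  unfolding Pspace_def by simp
lemma Pspace_sub: "Poly_Mapping.keys R \<subseteq> Poly_Mapping.keys P \<union> Poly_Mapping.keys Q \<Longrightarrow> P \<in> Pspace m p q \<Longrightarrow> Q \<in> Pspace m p q \<Longrightarrow> R \<in> Pspace m p q"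
  unfolding Pspace_def mem_Collect_eq Ball_def by (meson UnE subsetD)
lemma Pspace_add: "P \<in> Pspace m p q \<Longrightarrow> Q \<in> Pspace m p q \<Longrightarrow> P + Q \<in> Pspace m p q"
  by (rule Pspace_sub[OF keys_add])
lemma Pspace_uminus: "P \<in> Pspace m p q \<Longrightarrow> - P \<in> Pspace m p q"
  by (rule Pspace_sub[of _ P P]) auto
lemma Pspace_diff: "P \<in> Pspace m p q \<Longrightarrow> Q \<in> Pspace m p q \<Longrightarrow> P - Q \<in> Pspace m p q"
  by (rule Pspace_sub[OF keys_diff])
lemma Pspace_sc: "P \<in> Pspace m p q \<Longrightarrow> sc c P \<in> Pspace m p q"
  by (rule Pspace_sub[of _ P P]) (use keys_sc_sub in auto)
lemma Pspace_sum: "(\<And>i. i \<in> I \<Longrightarrow> f i \<in> Pspace m p q) \<Longrightarrow> sum f I \<in> Pspace m p q"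
proof (induction I rule: infinite_finite_induct)
  case (insert x F) then show ?case by (simp add: Pspace_add)
qed simp_all

lemma Pspace_shift:
  assumes "\<beta> \<in> Poly_Mapping.keys P" "P \<in> Pspace m p q" "i < 2*m"
  shows "Poly_Mapping.keys (\<beta> + ee i) \<subseteq> {..<2*m}"
    "(\<Sum>t<m. Poly_Mapping.lookup (\<beta> + ee i) t) = p + (\<Sum>t<m. Poly_Mapping.lookup (ee i) t)"
    "(\<Sum>t<m. Poly_Mapping.lookup (\<beta> + ee i) (m+t)) = q + (\<Sum>t<m. Poly_Mapping.lookup (ee i) (m+t))"
proof -
  have h: "Poly_Mapping.keys \<beta> \<subseteq> {..<2*m}" "(\<Sum>t<m. Poly_Mapping.lookup \<beta> t) = p" "(\<Sum>t<m. Poly_Mapping.lookup \<beta> (m+t)) = q"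
    using assms(1,2) unfolding Pspace_def by blast+
  have "Poly_Mapping.keys (\<beta> + ee i) \<subseteq> Poly_Mapping.keys \<beta> \<union> {i}"
    using keys_add[of \<beta> "ee i"] by simp
  then show "Poly_Mapping.keys (\<beta> + ee i) \<subseteq> {..<2*m}" using h(1) assms(3) by blast
  show "(\<Sum>t<m. Poly_Mapping.lookup (\<beta> + ee i) t) = p + (\<Sum>t<m. Poly_Mapping.lookup (ee i) t)"
    by (simp only: lookup_add sum.distrib h(2))
  show "(\<Sum>t<m. Poly_Mapping.lookup (\<beta> + ee i) (m+t)) = q + (\<Sum>t<m. Poly_Mapping.lookup (ee i) (m+t))"
    by (simp only: lookup_add sum.distrib h(3))
qed

lemma Pspace_pvar_x: assumes "j < m" "P \<in> Pspace m p q" shows "pvar j * P \<in> Pspace m (Suc p) q"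
  unfolding Pspace_def
proof (intro CollectI ballI)
  fix \<alpha> assume "\<alpha> \<in> Poly_Mapping.keys (pvar j * P)"
  then obtain \<beta> where b: "\<beta> \<in> Poly_Mapping.keys P" "\<alpha> = \<beta> + ee j" using keys_pvar_mult by blast
  have j: "j < 2*m" using assms(1) by simp
  show "Poly_Mapping.keys \<alpha> \<subseteq> {..<2*m} \<and> (\<Sum>t<m. Poly_Mapping.lookup \<alpha> t) = Suc p \<and> (\<Sum>t<m. Poly_Mapping.lookup \<alpha> (m+t)) = q"
    unfolding b(2) using Pspace_shift[OF b(1) assms(2) j] sum_ee_lt[OF assms(1)] sum_ee_ge[OF assms(1)] by simp
qed

lemma Pspace_pvar_u: assumes "j < m" "P \<in> Pspace m p q" shows "pvar (m+j) * P \<in> Pspace m p (Suc q)"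
  unfolding Pspace_def
proof (intro CollectI ballI)
  fix \<alpha> assume "\<alpha> \<in> Poly_Mapping.keys (pvar (m+j) * P)"
  then obtain \<beta> where b: "\<beta> \<in> Poly_Mapping.keys P" "\<alpha> = \<beta> + ee (m+j)" using keys_pvar_mult by blast
  have j: "m+j < 2*m" using assms(1) by simp
  show "Poly_Mapping.keys \<alpha> \<subseteq> {..<2*m} \<and> (\<Sum>t<m. Poly_Mapping.lookup \<alpha> t) = p \<and> (\<Sum>t<m. Poly_Mapping.lookup \<alpha> (m+t)) = Suc q"
    unfolding b(2) using Pspace_shift[OF b(1) assms(2) j] sum_ee_lt2[OF assms(1)] sum_ee_ge2[OF assms(1)] by simp
qed

lemma keys_sub_add: "Poly_Mapping.keys \<alpha> \<subseteq> Poly_Mapping.keys (\<alpha> + (\<beta>::nat\<Rightarrow>\<^sub>0nat))"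
  by (auto simp: in_keys_iff lookup_add)

lemma Pspace_pdiff_x: assumes "j < m" "P \<in> Pspace m p q" shows "pdiff j P \<in> Pspace m (p - 1) q"
  unfolding Pspace_def
proof (intro CollectI ballI)
  fix \<alpha> assume "\<alpha> \<in> Poly_Mapping.keys (pdiff j P)"
  then have b: "\<alpha> + ee j \<in> Poly_Mapping.keys P" by (rule keys_pdiff)
  then have h: "Poly_Mapping.keys (\<alpha> + ee j) \<subseteq> {..<2*m}" "(\<Sum>t<m. Poly_Mapping.lookup (\<alpha> + ee j) t) = p" "(\<Sum>t<m. Poly_Mapping.lookup (\<alpha> + ee j) (m+t)) = q"
    using assms(2) unfolding Pspace_def by blast+
  have s1: "(\<Sum>t<m. Poly_Mapping.lookup (\<alpha> + ee j) t) = (\<Sum>t<m. Poly_Mapping.lookup \<alpha> t) + 1"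
    by (simp only: lookup_add sum.distrib sum_ee_lt[OF assms(1)])
  have s2: "(\<Sum>t<m. Poly_Mapping.lookup (\<alpha> + ee j) (m+t)) = (\<Sum>t<m. Poly_Mapping.lookup \<alpha> (m+t))"
    by (simp only: lookup_add sum.distrib sum_ee_ge[OF assms(1)])
  show "Poly_Mapping.keys \<alpha> \<subseteq> {..<2*m} \<and> (\<Sum>t<m. Poly_Mapping.lookup \<alpha> t) = p - 1 \<and> (\<Sum>t<m. Poly_Mapping.lookup \<alpha> (m+t)) = q"
    using h s1 s2 keys_sub_add[of \<alpha> "ee j"] by auto
qed

lemma Pspace_pdiff_u: assumes "j < m" "P \<in> Pspace m p q" shows "pdiff (m+j) P \<in> Pspace m p (q - 1)"
  unfolding Pspace_def
proof (intro CollectI ballI)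
  fix \<alpha> assume "\<alpha> \<in> Poly_Mapping.keys (pdiff (m+j) P)"
  then have b: "\<alpha> + ee (m+j) \<in> Poly_Mapping.keys P" by (rule keys_pdiff)
  then have h: "Poly_Mapping.keys (\<alpha> + ee (m+j)) \<subseteq> {..<2*m}" "(\<Sum>t<m. Poly_Mapping.lookup (\<alpha> + ee (m+j)) t) = p" "(\<Sum>t<m. Poly_Mapping.lookup (\<alpha> + ee (m+j)) (m+t)) = q"
    using assms(2) unfolding Pspace_def by blast+
  have s1: "(\<Sum>t<m. Poly_Mapping.lookup (\<alpha> + ee (m+j)) t) = (\<Sum>t<m. Poly_Mapping.lookup \<alpha> t)"
    by (simp only: lookup_add sum.distrib sum_ee_lt2[OF assms(1)])
  have s2: "(\<Sum>t<m. Poly_Mapping.lookup (\<alpha> + ee (m+j)) (m+t)) = (\<Sum>t<m. Poly_Mapping.lookup \<alpha> (m+t)) + 1"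
    by (simp only: lookup_add sum.distrib sum_ee_ge2[OF assms(1)])
  show "Poly_Mapping.keys \<alpha> \<subseteq> {..<2*m} \<and> (\<Sum>t<m. Poly_Mapping.lookup \<alpha> t) = p \<and> (\<Sum>t<m. Poly_Mapping.lookup \<alpha> (m+t)) = q - 1"
    using h s1 s2 keys_sub_add[of \<alpha> "ee (m+j)"] by auto
qed

lemma pdiff_x_deg0: assumes "j < m" "P \<in> Pspace m 0 q" shows "pdiff j P = 0"
proof -
  have "Poly_Mapping.keys (pdiff j P) = {}"
  proof (rule ccontr)
    assume "Poly_Mapping.keys (pdiff j P) \<noteq> {}"
    then obtain \<alpha> where "\<alpha> \<in> Poly_Mapping.keys (pdiff j P)" by blast
    then have "\<alpha> + ee j \<in> Poly_Mapping.keys P" by (rule keys_pdiff)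
    then have "(\<Sum>t<m. Poly_Mapping.lookup (\<alpha> + ee j) t) = 0" using assms(2) by (auto simp: Pspace_def)
    then show False by (simp only: lookup_add sum.distrib sum_ee_lt[OF assms(1)])
  qed
  then show ?thesis by simp
qed

lemma pdiff_u_deg0: assumes "j < m" "P \<in> Pspace m p 0" shows "pdiff (m+j) P = 0"
proof -
  have "Poly_Mapping.keys (pdiff (m+j) P) = {}"
  proof (rule ccontr)
    assume "Poly_Mapping.keys (pdiff (m+j) P) \<noteq> {}"
    then obtain \<alpha> where "\<alpha> \<in> Poly_Mapping.keys (pdiff (m+j) P)" by blast
    then have "\<alpha> + ee (m+j) \<in> Poly_Mapping.keys P" by (rule keys_pdiff)
    then have "(\<Sum>t<m. Poly_Mapping.lookup (\<alpha> + ee (m+j)) (m+t)) = 0" using assms(2) by (auto simp: Pspace_def)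
    then show False by (simp only: lookup_add sum.distrib sum_ee_ge2[OF assms(1)])
  qed
  then show ?thesis by simp
qed

lemma euler_lookup:
  "Poly_Mapping.lookup (pvar j * pdiff j P) k = of_nat (Poly_Mapping.lookup k j) * Poly_Mapping.lookup P k"
proof (cases "1 \<le> Poly_Mapping.lookup k j")
  case c: True
  have e2: "k - ee j + ee j = k"
    by (rule poly_mapping_eqI) (use c in \<open>auto simp: lookup_add lookup_minus lookup_single when_def\<close>)
  have l: "Poly_Mapping.lookup (k - ee j) j + 1 = Poly_Mapping.lookup k j"
    using c by (simp add: lookup_minus)
  show ?thesis using c by (simp only: lookup_pvar_mult lookup_pdiff e2 l if_True)
next
  case False then show ?thesis by (simp add: lookup_pvar_mult)
qed

lemma euler_x: assumes "P \<in> Pspace m p q" shows "(\<Sum>j<m. pvar j * pdiff j P) = sc (of_nat p) P"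
proof (rule poly_mapping_eqI)
  fix k
  have "Poly_Mapping.lookup (\<Sum>j<m. pvar j * pdiff j P) k = of_nat (\<Sum>j<m. Poly_Mapping.lookup k j) * Poly_Mapping.lookup P k"
    by (simp add: lookup_sum euler_lookup sum_distrib_right)
  also have "\<dots> = of_nat p * Poly_Mapping.lookup P k"
    using assms by (cases "k \<in> Poly_Mapping.keys P") (auto simp: Pspace_def in_keys_iff)
  finally show "Poly_Mapping.lookup (\<Sum>j<m. pvar j * pdiff j P) k = Poly_Mapping.lookup (sc (of_nat p) P) k"
    by (simp add: lookup_sc)
qed

lemma euler_u: assumes "P \<in> Pspace m p q" shows "(\<Sum>j<m. pvar (m+j) * pdiff (m+j) P) = sc (of_nat q) P"
proof (rule poly_mapping_eqI)
  fix k
  have "Poly_Mapping.lookup (\<Sum>j<m. pvar (m+j) * pdiff (m+j) P) k = of_nat (\<Sum>j<m. Poly_Mapping.lookup k (m+j)) * Poly_Mapping.lookup P k"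
    by (simp add: lookup_sum euler_lookup sum_distrib_right)
  also have "\<dots> = of_nat q * Poly_Mapping.lookup P k"
    using assms by (cases "k \<in> Poly_Mapping.keys P") (auto simp: Pspace_def in_keys_iff)
  finally show "Poly_Mapping.lookup (\<Sum>j<m. pvar (m+j) * pdiff (m+j) P) k = Poly_Mapping.lookup (sc (of_nat q) P) k"
    by (simp add: lookup_sc)
qed

lemmas lin_simps = pdiff_add pdiff_diff pdiff_uminus pdiff_sum pdiff_sc

lemma pdiff2_pvar: "pdiff i (pdiff j (pvar k * F)) =
   (if i = k then pdiff j F else 0) + (if j = k then pdiff i F else 0) + pvar k * pdiff i (pdiff j F)"
  by (simp add: pdiff_pvar_mult pdiff_add pdiff_comm[of i j])

lemma pdiff_mult_pvar_nat_other:
  "j < m \<Longrightarrow> k < m \<Longrightarrow> pdiff (m + j) (pvar k * F) = pvar k * pdiff (m+j) F"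
  "j < m \<Longrightarrow> k < m \<Longrightarrow> pdiff j (pvar (m + k) * F) = pvar (m+k) * pdiff j F"
  by (simp_all add: pdiff_pvar_mult_other)

lemma Lap_u_x_du: "Lap_u m (x_du m P) = x_du m (Lap_u m P)"
proof -
  have "Lap_u m (x_du m P) = (\<Sum>j<m. \<Sum>k<m. pvar k * pdiff (m+j) (pdiff (m+j) (pdiff (m+k) P)))"
    unfolding Lap_u_def x_du_def
    by (intro sum.cong refl) (simp add: pdiff_sum pdiff_mult_pvar_nat_other)
  also have "\<dots> = x_du m (Lap_u m P)"
    unfolding Lap_u_def x_du_def
    by (subst sum.swap) (simp add: pdiff_sum sum_distrib_left pdiff_comm)
  finally show ?thesis .
qed

lemma sum_if_delta: "(k::nat) < m \<Longrightarrow> (\<Sum>j<m. if j = k then f j else 0) = f k"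
  by simp
lemma sum_if_delta': "(k::nat) < m \<Longrightarrow> (\<Sum>j<m. if k = j then f j else 0) = f k"
  by simp

lemma mult_if0: "c * (if P then a else 0) = (if P then c * a else (0::cpoly))" by simp

lemma H1: "k < m \<Longrightarrow> (\<Sum>j<m. pdiff j (pdiff j (pvar k * F))) = 2 * pdiff k F + pvar k * (\<Sum>j<m. pdiff j (pdiff j F))"
  by (simp add: pdiff2_pvar sum.distrib sum_distrib_left mult_if0)
lemma H2: "k < m \<Longrightarrow> (\<Sum>j<m. pdiff (m+j) (pdiff (m+j) (pvar k * F))) = pvar k * (\<Sum>j<m. pdiff (m+j) (pdiff (m+j) F))"
  by (simp add: pdiff2_pvar sum.distrib sum_distrib_left mult_if0)
lemma H3: "k < m \<Longrightarrow> (\<Sum>j<m. pdiff (m+j) (pdiff (m+j) (pvar (m+k) * F))) = 2 * pdiff (m+k) F + pvar (m+k) * (\<Sum>j<m. pdiff (m+j) (pdiff (m+j) F))"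
  by (simp add: pdiff2_pvar sum.distrib sum_distrib_left mult_if0)
lemma H4: "k < m \<Longrightarrow> (\<Sum>j<m. pdiff j (pdiff j (pvar (m+k) * F))) = pvar (m+k) * (\<Sum>j<m. pdiff j (pdiff j F))"
  by (simp add: pdiff2_pvar sum.distrib sum_distrib_left mult_if0)
lemma H5: "k < m \<Longrightarrow> (\<Sum>j<m. pdiff (m+j) (pdiff j (pvar k * F))) = pdiff (m+k) F + pvar k * (\<Sum>j<m. pdiff (m+j) (pdiff j F))"
  by (simp add: pdiff2_pvar sum.distrib sum_distrib_left mult_if0)
lemma H6: "k < m \<Longrightarrow> (\<Sum>j<m. pdiff (m+j) (pdiff j (pvar (m+k) * F))) = pdiff k F + pvar (m+k) * (\<Sum>j<m. pdiff (m+j) (pdiff j F))"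
  by (simp add: pdiff2_pvar sum.distrib sum_distrib_left pdiff_comm)

definition Eulx :: "nat \<Rightarrow> cpoly \<Rightarrow> cpoly" where "Eulx m R = (\<Sum>j<m. pvar j * pdiff j R)"
definition Eulu :: "nat \<Rightarrow> cpoly \<Rightarrow> cpoly" where "Eulu m R = (\<Sum>j<m. pvar (m+j) * pdiff (m+j) R)"

lemma Lap_x_x_du: "Lap_x m (x_du m P) = 2 * du_dx m P + x_du m (Lap_x m P)"
proof -
  have "Lap_x m (x_du m P) = (\<Sum>k<m. \<Sum>j<m. pdiff j (pdiff j (pvar k * pdiff (m+k) P)))"
    unfolding Lap_x_def x_du_def unfolding pdiff_sum by (rule sum.swap)
  also have "\<dots> = (\<Sum>k<m. 2 * pdiff k (pdiff (m+k) P) + pvar k * (\<Sum>j<m. pdiff j (pdiff j (pdiff (m+k) P))))"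
    by (intro sum.cong refl) (simp add: H1)
  also have "\<dots> = 2 * du_dx m P + x_du m (Lap_x m P)"
    unfolding du_dx_def x_du_def Lap_x_def
    by (simp add: sum.distrib sum_distrib_left pdiff_sum pdiff_comm)
  finally show ?thesis .
qed

lemma Lap_u_u_dx: "Lap_u m (u_dx m P) = 2 * du_dx m P + u_dx m (Lap_u m P)"
proof -
  have "Lap_u m (u_dx m P) = (\<Sum>k<m. \<Sum>j<m. pdiff (m+j) (pdiff (m+j) (pvar (m+k) * pdiff k P)))"
    unfolding Lap_u_def u_dx_def unfolding pdiff_sum by (rule sum.swap)
  also have "\<dots> = (\<Sum>k<m. 2 * pdiff (m+k) (pdiff k P) + pvar (m+k) * (\<Sum>j<m. pdiff (m+j) (pdiff (m+j) (pdiff k P))))"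
    by (intro sum.cong refl) (simp add: H3)
  also have "\<dots> = 2 * du_dx m P + u_dx m (Lap_u m P)"
    unfolding du_dx_def u_dx_def Lap_u_def
    by (simp add: sum.distrib sum_distrib_left pdiff_sum pdiff_comm)
  finally show ?thesis .
qed

lemma Lap_x_u_dx: "Lap_x m (u_dx m P) = u_dx m (Lap_x m P)"
proof -
  have "Lap_x m (u_dx m P) = (\<Sum>k<m. \<Sum>j<m. pdiff j (pdiff j (pvar (m+k) * pdiff k P)))"
    unfolding Lap_x_def u_dx_def unfolding pdiff_sum by (rule sum.swap)
  also have "\<dots> = (\<Sum>k<m. pvar (m+k) * (\<Sum>j<m. pdiff j (pdiff j (pdiff k P))))"
    by (intro sum.cong refl) (simp add: H4)
  also have "\<dots> = u_dx m (Lap_x m P)"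
    unfolding u_dx_def Lap_x_def
    by (simp add: sum_distrib_left pdiff_sum pdiff_comm)
  finally show ?thesis .
qed

lemma Lap_x_du_dx: "Lap_x m (du_dx m P) = du_dx m (Lap_x m P)"
  unfolding Lap_x_def du_dx_def pdiff_sum by (subst sum.swap) (simp add: pdiff_comm)
lemma Lap_u_du_dx: "Lap_u m (du_dx m P) = du_dx m (Lap_u m P)"
  unfolding Lap_u_def du_dx_def pdiff_sum by (subst sum.swap) (simp add: pdiff_comm)

lemma normx2_mult: "normx2 m * R = (\<Sum>k<m. pvar k * (pvar k * R))"
  unfolding normx2_def by (simp add: sum_distrib_right power2_eq_square mult.assoc)
lemma normu2_mult: "normu2 m * R = (\<Sum>k<m. pvar (m+k) * (pvar (m+k) * R))"
  unfolding normu2_def by (simp add: sum_distrib_right power2_eq_square mult.assoc)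
lemma ux_mult: "ux m * R = (\<Sum>k<m. pvar (m+k) * (pvar k * R))"
  unfolding ux_def by (simp add: sum_distrib_right mult.assoc)

lemma Lap_x_normx2: "Lap_x m (normx2 m * R) = 2 * of_nat m * R + 4 * Eulx m R + normx2 m * Lap_x m R"
proof -
  have "Lap_x m (normx2 m * R) = (\<Sum>k<m. \<Sum>j<m. pdiff j (pdiff j (pvar k * (pvar k * R))))"
    unfolding Lap_x_def normx2_mult unfolding pdiff_sum by (rule sum.swap)
  also have "\<dots> = (\<Sum>k<m. 2 * R + 4 * (pvar k * pdiff k R) + pvar k * (pvar k * Lap_x m R))"
    by (intro sum.cong refl) (simp only: lessThan_iff H1 pdiff_pvar_mult_same Lap_x_def pdiff_add, (simp add: algebra_simps)?)
  also have "\<dots> = 2 * of_nat m * R + 4 * Eulx m R + normx2 m * Lap_x m R"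
    unfolding Eulx_def normx2_mult by (simp add: sum.distrib sum_distrib_left)
  finally show ?thesis .
qed

lemma Lap_u_normu2: "Lap_u m (normu2 m * R) = 2 * of_nat m * R + 4 * Eulu m R + normu2 m * Lap_u m R"
proof -
  have "Lap_u m (normu2 m * R) = (\<Sum>k<m. \<Sum>j<m. pdiff (m+j) (pdiff (m+j) (pvar (m+k) * (pvar (m+k) * R))))"
    unfolding Lap_u_def normu2_mult unfolding pdiff_sum by (rule sum.swap)
  also have "\<dots> = (\<Sum>k<m. 2 * R + 4 * (pvar (m+k) * pdiff (m+k) R) + pvar (m+k) * (pvar (m+k) * Lap_u m R))"
    by (intro sum.cong refl) (simp only: lessThan_iff H3 pdiff_pvar_mult_same Lap_u_def pdiff_add, (simp add: algebra_simps)?)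
  also have "\<dots> = 2 * of_nat m * R + 4 * Eulu m R + normu2 m * Lap_u m R"
    unfolding Eulu_def normu2_mult by (simp add: sum.distrib sum_distrib_left)
  finally show ?thesis .
qed

lemma Lap_u_normx2: "Lap_u m (normx2 m * R) = normx2 m * Lap_u m R"
proof -
  have "Lap_u m (normx2 m * R) = (\<Sum>k<m. \<Sum>j<m. pdiff (m+j) (pdiff (m+j) (pvar k * (pvar k * R))))"
    unfolding Lap_u_def normx2_mult unfolding pdiff_sum by (rule sum.swap)
  also have "\<dots> = (\<Sum>k<m. pvar k * (pvar k * Lap_u m R))"
    by (intro sum.cong refl) (simp add: H2 Lap_u_def pdiff_mult_pvar_nat_other sum_distrib_left)
  also have "\<dots> = normx2 m * Lap_u m R"
    unfolding normx2_mult ..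
  finally show ?thesis .
qed

lemma Lap_x_normu2: "Lap_x m (normu2 m * R) = normu2 m * Lap_x m R"
proof -
  have "Lap_x m (normu2 m * R) = (\<Sum>k<m. \<Sum>j<m. pdiff j (pdiff j (pvar (m+k) * (pvar (m+k) * R))))"
    unfolding Lap_x_def normu2_mult unfolding pdiff_sum by (rule sum.swap)
  also have "\<dots> = (\<Sum>k<m. pvar (m+k) * (pvar (m+k) * Lap_x m R))"
    by (intro sum.cong refl) (simp add: H4 Lap_x_def pdiff_mult_pvar_nat_other sum_distrib_left)
  also have "\<dots> = normu2 m * Lap_x m R"
    unfolding normu2_mult ..
  finally show ?thesis .
qed

lemma Lap_x_ux: "Lap_x m (ux m * P) = 2 * u_dx m P + ux m * Lap_x m P"
proof -
  have "Lap_x m (ux m * P) = (\<Sum>k<m. \<Sum>j<m. pdiff j (pdiff j (pvar (m+k) * (pvar k * P))))"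
    unfolding Lap_x_def ux_mult unfolding pdiff_sum by (rule sum.swap)
  also have "\<dots> = (\<Sum>k<m. 2 * (pvar (m+k) * pdiff k P) + pvar (m+k) * (pvar k * Lap_x m P))"
    by (intro sum.cong refl) (simp only: lessThan_iff H4 H1 Lap_x_def, (simp add: algebra_simps)?)
  also have "\<dots> = 2 * u_dx m P + ux m * Lap_x m P"
    unfolding u_dx_def ux_mult by (simp add: sum.distrib sum_distrib_left)
  finally show ?thesis .
qed

lemma Lap_u_ux: "Lap_u m (ux m * P) = 2 * x_du m P + ux m * Lap_u m P"
proof -
  have "Lap_u m (ux m * P) = (\<Sum>k<m. \<Sum>j<m. pdiff (m+j) (pdiff (m+j) (pvar (m+k) * (pvar k * P))))"
    unfolding Lap_u_def ux_mult unfolding pdiff_sum by (rule sum.swap)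
  also have "\<dots> = (\<Sum>k<m. 2 * (pvar k * pdiff (m+k) P) + pvar (m+k) * (pvar k * Lap_u m P))"
    by (intro sum.cong refl) (simp only: lessThan_iff H3, simp only: H2 pdiff_mult_pvar_nat_other(1) Lap_u_def, (simp add: algebra_simps)?)
  also have "\<dots> = 2 * x_du m P + ux m * Lap_u m P"
    unfolding x_du_def ux_mult by (simp add: sum.distrib sum_distrib_left)
  finally show ?thesis .
qed

lemma du_dx_x_du: "du_dx m (x_du m P) = Lap_u m P + x_du m (du_dx m P)"
proof -
  have "du_dx m (x_du m P) = (\<Sum>k<m. \<Sum>j<m. pdiff (m+j) (pdiff j (pvar k * pdiff (m+k) P)))"
    unfolding du_dx_def x_du_def unfolding pdiff_sum by (rule sum.swap)
  also have "\<dots> = (\<Sum>k<m. pdiff (m+k) (pdiff (m+k) P) + pvar k * (\<Sum>j<m. pdiff (m+j) (pdiff j (pdiff (m+k) P))))"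
    by (intro sum.cong refl) (simp add: H5)
  also have "\<dots> = Lap_u m P + x_du m (du_dx m P)"
    unfolding du_dx_def x_du_def Lap_u_def
    by (simp add: sum.distrib sum_distrib_left pdiff_sum pdiff_comm)
  finally show ?thesis .
qed

lemma du_dx_normx2: "du_dx m (normx2 m * R) = 2 * x_du m R + normx2 m * du_dx m R"
proof -
  have "du_dx m (normx2 m * R) = (\<Sum>k<m. \<Sum>j<m. pdiff (m+j) (pdiff j (pvar k * (pvar k * R))))"
    unfolding du_dx_def normx2_mult unfolding pdiff_sum by (rule sum.swap)
  also have "\<dots> = (\<Sum>k<m. 2 * (pvar k * pdiff (m+k) R) + pvar k * (pvar k * du_dx m R))"
    by (intro sum.cong refl) (simp only: lessThan_iff H5 du_dx_def pdiff_mult_pvar_nat_other pdiff_pvar_mult_same pdiff_add, (simp add: algebra_simps)?)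
  also have "\<dots> = 2 * x_du m R + normx2 m * du_dx m R"
    unfolding x_du_def normx2_mult by (simp add: sum.distrib sum_distrib_left)
  finally show ?thesis .
qed

lemma x_du_sc: "x_du m (sc c P) = sc c (x_du m P)"
  unfolding x_du_def pdiff_sc sum_distrib_left by (simp add: mult.left_commute)
lemma u_dx_sc: "u_dx m (sc c P) = sc c (u_dx m P)"
  unfolding u_dx_def pdiff_sc sum_distrib_left by (simp add: mult.left_commute)
lemma du_dx_sc: "du_dx m (sc c P) = sc c (du_dx m P)"
  unfolding du_dx_def by (simp add: pdiff_sc sum_distrib_left)
lemma Lap_x_sc: "Lap_x m (sc c P) = sc c (Lap_x m P)"
  unfolding Lap_x_def by (simp add: pdiff_sc sum_distrib_left)
lemma Lap_u_sc: "Lap_u m (sc c P) = sc c (Lap_u m P)"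
  unfolding Lap_u_def by (simp add: pdiff_sc sum_distrib_left)

lemma x_du_add: "x_du m (P + Q) = x_du m P + x_du m Q"
  unfolding x_du_def by (simp add: pdiff_add distrib_left sum.distrib)
lemma u_dx_add: "u_dx m (P + Q) = u_dx m P + u_dx m Q"
  unfolding u_dx_def by (simp add: pdiff_add distrib_left sum.distrib)
lemma du_dx_add: "du_dx m (P + Q) = du_dx m P + du_dx m Q"
  unfolding du_dx_def by (simp add: pdiff_add sum.distrib)
lemma Lap_x_add: "Lap_x m (P + Q) = Lap_x m P + Lap_x m Q"
  unfolding Lap_x_def by (simp add: pdiff_add sum.distrib)
lemma Lap_u_add: "Lap_u m (P + Q) = Lap_u m P + Lap_u m Q"
  unfolding Lap_u_def by (simp add: pdiff_add sum.distrib)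

lemma x_du_diff: "x_du m (P - Q) = x_du m P - x_du m Q"
  unfolding x_du_def by (simp add: pdiff_diff right_diff_distrib sum_subtractf)
lemma u_dx_diff: "u_dx m (P - Q) = u_dx m P - u_dx m Q"
  unfolding u_dx_def by (simp add: pdiff_diff right_diff_distrib sum_subtractf)
lemma du_dx_diff: "du_dx m (P - Q) = du_dx m P - du_dx m Q"
  unfolding du_dx_def by (simp add: pdiff_diff sum_subtractf)
lemma Lap_x_diff: "Lap_x m (P - Q) = Lap_x m P - Lap_x m Q"
  unfolding Lap_x_def by (simp add: pdiff_diff sum_subtractf)
lemma Lap_u_diff: "Lap_u m (P - Q) = Lap_u m P - Lap_u m Q"
  unfolding Lap_u_def by (simp add: pdiff_diff sum_subtractf)

lemma ops_zero [simp]: "x_du m 0 = 0" "u_dx m 0 = 0" "du_dx m 0 = 0" "Lap_x m 0 = 0" "Lap_u m 0 = 0"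
  by (simp_all add: x_du_def u_dx_def du_dx_def Lap_x_def Lap_u_def)

lemma Pspace_x_du: "P \<in> Pspace m p q \<Longrightarrow> x_du m P \<in> Pspace m (Suc p) (q - 1)"
  unfolding x_du_def by (intro Pspace_sum Pspace_pvar_x Pspace_pdiff_u) auto
lemma Pspace_u_dx: "P \<in> Pspace m p q \<Longrightarrow> u_dx m P \<in> Pspace m (p - 1) (Suc q)"
  unfolding u_dx_def by (intro Pspace_sum Pspace_pvar_u Pspace_pdiff_x) auto
lemma Pspace_du_dx: "P \<in> Pspace m p q \<Longrightarrow> du_dx m P \<in> Pspace m (p - 1) (q - 1)"
  unfolding du_dx_def by (intro Pspace_sum Pspace_pdiff_u Pspace_pdiff_x) auto
lemma Pspace_normx2: "P \<in> Pspace m p q \<Longrightarrow> normx2 m * P \<in> Pspace m (Suc (Suc p)) q"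
  unfolding normx2_mult by (intro Pspace_sum Pspace_pvar_x) auto
lemma Pspace_normu2: "P \<in> Pspace m p q \<Longrightarrow> normu2 m * P \<in> Pspace m p (Suc (Suc q))"
  unfolding normu2_mult by (intro Pspace_sum Pspace_pvar_u) auto
lemma Pspace_ux: "P \<in> Pspace m p q \<Longrightarrow> ux m * P \<in> Pspace m (Suc p) (Suc q)"
  unfolding ux_mult by (intro Pspace_sum Pspace_pvar_u Pspace_pvar_x) auto

lemma du_dx_deg0_x: "P \<in> Pspace m 0 q \<Longrightarrow> du_dx m P = 0"
  unfolding du_dx_def by (simp add: pdiff_x_deg0)
lemma du_dx_deg0_u: "P \<in> Pspace m p 0 \<Longrightarrow> du_dx m P = 0"
  unfolding du_dx_def by (subst pdiff_comm) (simp add: pdiff_u_deg0)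
lemma u_dx_deg0: "P \<in> Pspace m 0 q \<Longrightarrow> u_dx m P = 0"
  unfolding u_dx_def by (simp add: pdiff_x_deg0)
lemma x_du_deg0: "P \<in> Pspace m p 0 \<Longrightarrow> x_du m P = 0"
  unfolding x_du_def by (simp add: pdiff_u_deg0)

lemma Ex_Pspace: "P \<in> Pspace m p q \<Longrightarrow> Eulx m P = of_nat p * P"
  unfolding Eulx_def using euler_x[of P m p q] by simp
lemma Eu_Pspace: "P \<in> Pspace m p q \<Longrightarrow> Eulu m P = of_nat q * P"
  unfolding Eulu_def using euler_u[of P m p q] by simp

lemma harmI: "Lap_x m P = 0 \<Longrightarrow> Lap_u m P = 0 \<Longrightarrow> P \<in> harm m" by (simp add: harm_def)
lemma harmD: "P \<in> harm m \<Longrightarrow> Lap_x m P = 0" "P \<in> harm m \<Longrightarrow> Lap_u m P = 0" by (simp_all add: harm_def)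

lemma harm_du_dx: "P \<in> harm m \<Longrightarrow> du_dx m P \<in> harm m"
  by (simp add: harm_def Lap_x_du_dx Lap_u_du_dx)
lemma harm_sc: "P \<in> harm m \<Longrightarrow> sc c P \<in> harm m"
  by (simp add: harm_def Lap_x_sc Lap_u_sc)
lemma harm_add: "P \<in> harm m \<Longrightarrow> Q \<in> harm m \<Longrightarrow> P + Q \<in> harm m"
  by (simp add: harm_def Lap_x_add Lap_u_add)
lemma harm_diff: "P \<in> harm m \<Longrightarrow> Q \<in> harm m \<Longrightarrow> P - Q \<in> harm m"
  by (simp add: harm_def Lap_x_diff Lap_u_diff)
lemma harm_zero [simp]: "0 \<in> harm m" by (simp add: harm_def)

lemma Lap_x_normx2_harm: "R \<in> Pspace m p q \<Longrightarrow> R \<in> harm m \<Longrightarrow> Lap_x m (normx2 m * R) = (2 * of_nat m + 4 * of_nat p) * R"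
  unfolding Lap_x_normx2 by (simp add: Ex_Pspace harmD algebra_simps)
lemma Lap_u_normu2_harm: "R \<in> Pspace m p q \<Longrightarrow> R \<in> harm m \<Longrightarrow> Lap_u m (normu2 m * R) = (2 * of_nat m + 4 * of_nat q) * R"
  unfolding Lap_u_normu2 by (simp add: Eu_Pspace harmD algebra_simps)

subsection \<open>Fischer adjointness for multiplication operators\<close>

lemma fischer_normx2_1: "fischer (normx2 m * F) Q = fischer F (Lap_x m Q)"
  unfolding normx2_mult Lap_x_def fischer_sum1 fischer_sum2 fischer_pvar1 ..
lemma fischer_normu2_1: "fischer (normu2 m * F) Q = fischer F (Lap_u m Q)"
  unfolding normu2_mult Lap_u_def fischer_sum1 fischer_sum2 fischer_pvar1 ..
lemma fischer_normx2_2: "fischer Q (normx2 m * F) = fischer (Lap_x m Q) F"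
  by (subst (1 2) fischer_conj) (simp add: fischer_normx2_1)
lemma fischer_normu2_2: "fischer Q (normu2 m * F) = fischer (Lap_u m Q) F"
  by (subst (1 2) fischer_conj) (simp add: fischer_normu2_1)

lemma decomp_unique:
  assumes h: "\<And>a b. a \<le> A \<Longrightarrow> b \<le> B \<Longrightarrow> Hs a b \<in> harm m"
    and h': "\<And>a b. a \<le> A \<Longrightarrow> b \<le> B \<Longrightarrow> Hs' a b \<in> harm m"
    and eq: "(\<Sum>a\<le>A. \<Sum>b\<le>B. normx2 m ^ a * normu2 m ^ b * Hs a b) = (\<Sum>a\<le>A. \<Sum>b\<le>B. normx2 m ^ a * normu2 m ^ b * Hs' a b)"
  shows "Hs 0 0 = Hs' 0 0"
proof -
  define G where "G a b = Hs a b - Hs' a b" for a b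
  define f where "f = (\<lambda>(a,b). normx2 m ^ a * normu2 m ^ b * G a b)"
  define S where "S = {..A} \<times> {..B}"
  have fS: "finite S" by (simp add: S_def)
  have z: "(0,0) \<in> S" by (simp add: S_def)
  have "(\<Sum>ab\<in>S. f ab) = (\<Sum>a\<le>A. \<Sum>b\<le>B. normx2 m ^ a * normu2 m ^ b * Hs a b) - (\<Sum>a\<le>A. \<Sum>b\<le>B. normx2 m ^ a * normu2 m ^ b * Hs' a b)"
    unfolding S_def f_def G_def sum.cartesian_product[symmetric]
    by (simp add: right_diff_distrib sum_subtractf del: sum.cartesian_product)
  then have s0: "(\<Sum>ab\<in>S. f ab) = 0" using eq by simp
  define D where "D = G 0 0"
  have Dh: "D \<in> harm m" unfolding D_def G_def using h h' by (intro harm_diff) auto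
  have f00: "f (0,0) = D" by (simp add: f_def D_def)
  have orth: "fischer (f ab) D = 0" if "ab \<in> S - {(0,0)}" for ab
  proof -
    obtain a b where ab: "ab = (a,b)" by (cases ab)
    show ?thesis
    proof (cases "a = 0")
      case False
      then have "f ab = normx2 m * (normx2 m ^ (a - 1) * normu2 m ^ b * G a b)"
        by (simp add: f_def ab mult.assoc power_eq_if)
      then show ?thesis using Dh by (simp add: fischer_normx2_1 harmD)
    next
      case True
      then have "b \<noteq> 0" using that ab by auto
      then have "f ab = normu2 m * (normu2 m ^ (b - 1) * G a b)"
        using True by (simp add: f_def ab mult.assoc power_eq_if)
      then show ?thesis using Dh by (simp add: fischer_normu2_1 harmD)
    qed
  qed
  have "D + (\<Sum>ab\<in>S - {(0,0)}. f ab) = 0"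
    using s0 sum.remove[OF fS z, of f] f00 by simp
  then have "D = - (\<Sum>ab\<in>S - {(0,0)}. f ab)" by (simp add: eq_neg_iff_add_eq_0)
  then have "fischer D D = - (\<Sum>ab\<in>S - {(0,0)}. fischer (f ab) D)"
    by (metis fischer_sum1 fischer_uminus1)
  also have "\<dots> = 0" using orth by simp
  finally have "D = 0" by (rule fischer_pos)
  then show ?thesis by (simp add: D_def G_def)
qed

lemma div2_eq0: "(q::nat) div 2 = 0 \<longleftrightarrow> q < 2" by auto

lemma sum_atMost_01:
  fixes A :: nat
  assumes "\<And>a. 2 \<le> a \<Longrightarrow> g a = (0::'a::comm_monoid_add)" "A = 0 \<Longrightarrow> g 1 = 0"
  shows "(\<Sum>a\<le>A. g a) = g 0 + g 1"
proof (cases A)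
  case 0 then show ?thesis using assms(2) by simp
next
  case (Suc n)
  have "(\<Sum>a\<le>A. g a) = (\<Sum>a\<le>1. g a)"
    by (rule sum.mono_neutral_right) (use Suc assms(1) in auto)
  then show ?thesis by simp
qed

definition V :: "nat \<Rightarrow> nat \<Rightarrow> nat \<Rightarrow> cpoly set" where "V m p q = Pspace m p q \<inter> harm m"

lemma pi_s_char:
  assumes H: "H \<in> V m p q" and X1: "X1 \<in> V m (p - 2) q" and X2: "X2 \<in> V m p (q - 2)" and X3: "X3 \<in> V m (p - 2) (q - 2)"
    and z1: "p < 2 \<Longrightarrow> X1 = 0" and z2: "q < 2 \<Longrightarrow> X2 = 0" and z3: "p < 2 \<or> q < 2 \<Longrightarrow> X3 = 0"
  shows "pi_s m p q (H + normx2 m * X1 + normu2 m * X2 + normx2 m * (normu2 m * X3)) = H"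
proof -
  let ?Y = "H + normx2 m * X1 + normu2 m * X2 + normx2 m * (normu2 m * X3)"
  define Hs where "Hs a b = (if a = 0 \<and> b = 0 then H else if a = 1 \<and> b = 0 then X1
      else if a = 0 \<and> b = 1 then X2 else if a = 1 \<and> b = 1 then X3 else 0)" for a b :: nat
  let ?P = "\<lambda>H'. \<exists>Hs :: nat \<Rightarrow> nat \<Rightarrow> cpoly.
      (\<forall>a\<le>p div 2. \<forall>b\<le>q div 2. Hs a b \<in> Pspace m (p - 2*a) (q - 2*b) \<inter> harm m)
      \<and> ?Y = (\<Sum>a\<le>p div 2. \<Sum>b\<le>q div 2. normx2 m ^ a * normu2 m ^ b * Hs a b)
      \<and> H' = Hs 0 0"
  have mem: "Hs a b \<in> Pspace m (p - 2*a) (q - 2*b) \<inter> harm m" for a b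
    using H X1 X2 X3 by (auto simp: Hs_def V_def)
  have inner: "(\<Sum>b\<le>q div 2. normx2 m ^ a * normu2 m ^ b * Hs a b) =
      normx2 m ^ a * Hs a 0 + normx2 m ^ a * normu2 m * Hs a 1" for a
    by (subst sum_atMost_01) (use z2 z3 in \<open>auto simp: Hs_def div2_eq0\<close>)
  have sumY: "(\<Sum>a\<le>p div 2. \<Sum>b\<le>q div 2. normx2 m ^ a * normu2 m ^ b * Hs a b) = ?Y"
    unfolding inner
    by (subst sum_atMost_01) (use z1 z3 in \<open>auto simp: Hs_def div2_eq0 algebra_simps\<close>)
  have ex: "?P H"
    by (rule exI[of _ Hs]) (use mem sumY in \<open>simp add: Hs_def\<close>)
  have uniq: "H' = H" if "?P H'" for H'
  proof -
    from that obtain Hs' where m': "\<forall>a\<le>p div 2. \<forall>b\<le>q div 2. Hs' a b \<in> Pspace m (p - 2*a) (q - 2*b) \<inter> harm m"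
      and e': "?Y = (\<Sum>a\<le>p div 2. \<Sum>b\<le>q div 2. normx2 m ^ a * normu2 m ^ b * Hs' a b)" and h': "H' = Hs' 0 0"
      by blast
    have "Hs' 0 0 = Hs 0 0"
      by (rule decomp_unique[of "p div 2" "q div 2"]) (use m' mem e' sumY in auto)
    then show ?thesis using h' by (simp add: Hs_def)
  qed
  show ?thesis unfolding pi_s_def
    by (rule the_equality) (use ex uniq in blast)+
qed

lemma pi_s_id: "H \<in> V m p q \<Longrightarrow> pi_s m p q H = H"
  using pi_s_char[of H m p q 0 0 0] by (simp add: V_def)

definition scal :: "complex \<Rightarrow> cpoly \<Rightarrow> cpoly" where "scal c P = Poly_Mapping.single 0 c * P"

lemma scal_scal [simp]: "scal a (scal b P) = scal (a * b) P"
  unfolding scal_def by (rule sc_sc)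
lemma scal_add: "scal a (P + Q) = scal a P + scal a Q" unfolding scal_def by (simp add: algebra_simps)
lemma scal_diff: "scal a (P - Q) = scal a P - scal a Q" unfolding scal_def by (simp add: algebra_simps)
lemma scal_add_left: "scal a P + scal b P = scal (a + b) P" unfolding scal_def by (simp add: single_add algebra_simps)
lemma scal_diff_left: "scal a P - scal b P = scal (a - b) P" unfolding scal_def by (simp add: single_diff algebra_simps)
lemma scal_zero [simp]: "scal a 0 = 0" "scal 0 P = 0" unfolding scal_def by simp_all
lemma scal_one [simp]: "scal 1 P = P" unfolding scal_def by simp
lemma scal_mult: "Q * scal c P = scal c (Q * P)" unfolding scal_def by (simp add: mult_ac)
lemma num_scal: "numeral n * P = scal (numeral n) P" unfolding scal_def by simp
lemma of_nat_scal: "of_nat n * P = scal (of_nat n) P" unfolding scal_def by simp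
lemma pdiff_scal: "pdiff i (scal c P) = scal c (pdiff i P)" unfolding scal_def by (rule pdiff_sc)
lemma x_du_scal: "x_du m (scal c P) = scal c (x_du m P)" unfolding scal_def by (rule x_du_sc)
lemma u_dx_scal: "u_dx m (scal c P) = scal c (u_dx m P)" unfolding scal_def by (rule u_dx_sc)
lemma du_dx_scal: "du_dx m (scal c P) = scal c (du_dx m P)" unfolding scal_def by (rule du_dx_sc)
lemma Lap_x_scal: "Lap_x m (scal c P) = scal c (Lap_x m P)" unfolding scal_def by (rule Lap_x_sc)
lemma Lap_u_scal: "Lap_u m (scal c P) = scal c (Lap_u m P)" unfolding scal_def by (rule Lap_u_sc)
lemma fischer_scal1: "fischer (scal c P) R = cnj c * fischer P R" unfolding scal_def by (rule fischer_sc1)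
lemma fischer_scal2: "fischer R (scal c P) = c * fischer R P" unfolding scal_def by (rule fischer_sc2)
lemma Pspace_scal: "P \<in> Pspace m p q \<Longrightarrow> scal c P \<in> Pspace m p q" unfolding scal_def by (rule Pspace_sc)
lemma harm_scal: "P \<in> harm m \<Longrightarrow> scal c P \<in> harm m" unfolding scal_def by (rule harm_sc)
lemma V_scal: "P \<in> V m p q \<Longrightarrow> scal c P \<in> V m p q" by (simp add: V_def Pspace_scal harm_scal)
lemma V_add: "P \<in> V m p q \<Longrightarrow> Q \<in> V m p q \<Longrightarrow> P + Q \<in> V m p q" by (simp add: V_def Pspace_add harm_add)
lemma V_diff: "P \<in> V m p q \<Longrightarrow> Q \<in> V m p q \<Longrightarrow> P - Q \<in> V m p q" by (simp add: V_def Pspace_diff harm_diff)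
lemma V_zero [simp]: "0 \<in> V m p q" by (simp add: V_def)
lemma V_du_dx: "P \<in> V m p q \<Longrightarrow> du_dx m P \<in> V m (p - 1) (q - 1)"
  unfolding V_def by (blast intro: Pspace_du_dx harm_du_dx)

lemma Lap_x_normx2_V: assumes "R \<in> V m p q" shows "Lap_x m (normx2 m * R) = scal (2 * of_nat m + 4 * of_nat p) R"
proof -
  have "R \<in> Pspace m p q" "Lap_x m R = 0" using assms by (auto simp: V_def harm_def)
  then show ?thesis unfolding Lap_x_normx2
    by (simp only: Ex_Pspace mult.assoc, simp only: of_nat_scal, simp only: num_scal scal_scal scal_add_left, simp add: algebra_simps)
qed
lemma Lap_u_normu2_V: assumes "R \<in> V m p q" shows "Lap_u m (normu2 m * R) = scal (2 * of_nat m + 4 * of_nat q) R"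
proof -
  have "R \<in> Pspace m p q" "Lap_u m R = 0" using assms by (auto simp: V_def harm_def)
  then show ?thesis unfolding Lap_u_normu2
    by (simp only: Eu_Pspace mult.assoc, simp only: of_nat_scal, simp only: num_scal scal_scal scal_add_left, simp add: algebra_simps)
qed

definition cf :: "nat \<Rightarrow> nat \<Rightarrow> real" where "cf m p = 1 / (real m + 2 * real p - 2)"

lemma cf_eq: "m > 4 \<Longrightarrow> 1 \<le> p \<Longrightarrow> (2 * of_nat m + 4 * of_nat (p - 1)) * complex_of_real (cf m p) = 2"
proof -
  assume a: "m > 4" "1 \<le> p"
  have pos: "real m + 2 * real p - 2 > 0" using a by simp
  have "(2 * real m + 4 * real (p - 1)) * cf m p = 2"
    using pos a by (simp add: cf_def of_nat_diff field_simps)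
  then have "complex_of_real ((2 * real m + 4 * real (p - 1)) * cf m p) = 2" by simp
  then show ?thesis by simp
qed

subsection \<open>Explicit formulas for the operators\<close>

lemma A_op_formula: "P \<in> V m p q \<Longrightarrow> A_op m p q P = du_dx m P"
  unfolding A_op_def by (rule pi_s_id[OF V_du_dx])

lemma S_x_formula:
  assumes m: "m > 4" and P: "P \<in> V m p q"
  shows "S_x m p q P = x_du m P - normx2 m * scal (cf m p) (du_dx m P)"
    and "x_du m P - normx2 m * scal (cf m p) (du_dx m P) \<in> V m (Suc p) (q - 1)"
proof -
  let ?a = "complex_of_real (cf m p)"
  define R where "R = du_dx m P"
  have RV: "R \<in> V m (p - 1) (q - 1)" unfolding R_def by (rule V_du_dx[OF P])
  have Ph: "Lap_x m P = 0" "Lap_u m P = 0" and Pp: "P \<in> Pspace m p q" using P by (auto simp: V_def harm_def)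
  define H where "H = x_du m P - normx2 m * scal ?a R"
  have HV: "H \<in> V m (Suc p) (q - 1)"
  proof (cases "p = 0")
    case True
    then have R0: "R = 0" unfolding R_def using Pp du_dx_deg0_x by simp
    have "Lap_x m (x_du m P) = 0" "Lap_u m (x_du m P) = 0"
      using Ph by (simp_all add: Lap_x_x_du Lap_u_x_du R0[unfolded R_def])
    moreover have "x_du m P \<in> Pspace m (Suc p) (q - 1)" using Pp by (rule Pspace_x_du)
    ultimately show ?thesis by (simp add: H_def R0 V_def harm_def)
  next
    case False
    then have p1: "1 \<le> p" by simp
    have aR: "scal ?a R \<in> V m (p - 1) (q - 1)" by (rule V_scal[OF RV])
    have "Lap_x m H = 2 * R - scal ((2 * of_nat m + 4 * of_nat (p - 1)) * ?a) R"
      unfolding H_def Lap_x_diff Lap_x_x_du Lap_x_normx2_V[OF aR] using Ph by (simp add: R_def)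
    also have "\<dots> = 0" using cf_eq[OF m p1] by (simp add: num_scal)
    finally have lx: "Lap_x m H = 0" .
    have "Lap_u m H = 0"
      unfolding H_def Lap_u_diff Lap_u_x_du Lap_u_normx2 Lap_u_scal using Ph RV by (simp add: V_def harmD)
    moreover have "H \<in> Pspace m (Suc p) (q - 1)"
    proof -
      have "normx2 m * scal ?a R \<in> Pspace m (Suc (Suc (p - 1))) (q - 1)"
        using aR by (intro Pspace_normx2) (simp add: V_def)
      then show ?thesis unfolding H_def using p1 Pp by (intro Pspace_diff Pspace_x_du) auto
    qed
    ultimately show ?thesis using lx by (simp add: V_def harm_def)
  qed
  have "S_x m p q P = pi_s m (Suc p) (q - 1) (H + normx2 m * scal ?a R + normu2 m * 0 + normx2 m * (normu2 m * 0))"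
    by (simp add: S_x_def H_def)
  also have "\<dots> = H"
  proof (rule pi_s_char[OF HV])
    show "scal ?a R \<in> V m (Suc p - 2) (q - 1)" using V_scal[OF RV] by simp
    show "Suc p < 2 \<Longrightarrow> scal ?a R = 0" unfolding R_def using Pp du_dx_deg0_x by simp
  qed simp_all
  finally show "S_x m p q P = x_du m P - normx2 m * scal (cf m p) (du_dx m P)" by (simp add: H_def R_def)
  show "x_du m P - normx2 m * scal (cf m p) (du_dx m P) \<in> V m (Suc p) (q - 1)" using HV by (simp add: H_def R_def)
qed

lemma S_u_formula:
  assumes m: "m > 4" and P: "P \<in> V m p q"
  shows "S_u m p q P = u_dx m P - normu2 m * scal (cf m q) (du_dx m P)"
    and "u_dx m P - normu2 m * scal (cf m q) (du_dx m P) \<in> V m (p - 1) (Suc q)"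
proof -
  let ?a = "complex_of_real (cf m q)"
  define R where "R = du_dx m P"
  have RV: "R \<in> V m (p - 1) (q - 1)" unfolding R_def by (rule V_du_dx[OF P])
  have Ph: "Lap_x m P = 0" "Lap_u m P = 0" and Pp: "P \<in> Pspace m p q" using P by (auto simp: V_def harm_def)
  define H where "H = u_dx m P - normu2 m * scal ?a R"
  have HV: "H \<in> V m (p - 1) (Suc q)"
  proof (cases "q = 0")
    case True
    then have R0: "R = 0" unfolding R_def using Pp du_dx_deg0_u by simp
    have "Lap_x m (u_dx m P) = 0" "Lap_u m (u_dx m P) = 0"
      using Ph by (simp_all add: Lap_u_u_dx Lap_x_u_dx R0[unfolded R_def])
    moreover have "u_dx m P \<in> Pspace m (p - 1) (Suc q)" using Pp by (rule Pspace_u_dx)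
    ultimately show ?thesis by (simp add: H_def R0 V_def harm_def)
  next
    case False
    then have q1: "1 \<le> q" by simp
    have aR: "scal ?a R \<in> V m (p - 1) (q - 1)" by (rule V_scal[OF RV])
    have "Lap_u m H = 2 * R - scal ((2 * of_nat m + 4 * of_nat (q - 1)) * ?a) R"
      unfolding H_def Lap_u_diff Lap_u_u_dx Lap_u_normu2_V[OF aR] using Ph by (simp add: R_def)
    also have "\<dots> = 0" using cf_eq[OF m q1] by (simp add: num_scal)
    finally have lu: "Lap_u m H = 0" .
    have "Lap_x m H = 0"
      unfolding H_def Lap_x_diff Lap_x_u_dx Lap_x_normu2 Lap_x_scal using Ph RV by (simp add: V_def harmD)
    moreover have "H \<in> Pspace m (p - 1) (Suc q)"
    proof -
      have "normu2 m * scal ?a R \<in> Pspace m (p - 1) (Suc (Suc (q - 1)))"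
        using aR by (intro Pspace_normu2) (simp add: V_def)
      then show ?thesis unfolding H_def using q1 Pp by (intro Pspace_diff Pspace_u_dx) auto
    qed
    ultimately show ?thesis using lu by (simp add: V_def harm_def)
  qed
  have "S_u m p q P = pi_s m (p - 1) (Suc q) (H + normx2 m * 0 + normu2 m * scal ?a R + normx2 m * (normu2 m * 0))"
    by (simp add: S_u_def H_def)
  also have "\<dots> = H"
  proof (rule pi_s_char[OF HV])
    show "scal ?a R \<in> V m (p - 1) (Suc q - 2)" using V_scal[OF RV] by simp
    show "Suc q < 2 \<Longrightarrow> scal ?a R = 0" unfolding R_def using Pp du_dx_deg0_u by simp
  qed simp_all
  finally show "S_u m p q P = u_dx m P - normu2 m * scal (cf m q) (du_dx m P)" by (simp add: H_def R_def)
  show "u_dx m P - normu2 m * scal (cf m q) (du_dx m P) \<in> V m (p - 1) (Suc q)" using HV by (simp add: H_def R_def)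
qed

lemma S_x_V: "m > 4 \<Longrightarrow> P \<in> V m p q \<Longrightarrow> S_x m p q P \<in> V m (Suc p) (q - 1)"
  using S_x_formula by metis
lemma S_u_V: "m > 4 \<Longrightarrow> P \<in> V m p q \<Longrightarrow> S_u m p q P \<in> V m (p - 1) (Suc q)"
  using S_u_formula by metis
lemma A_V: "P \<in> V m p q \<Longrightarrow> A_op m p q P \<in> V m (p - 1) (q - 1)"
  using A_op_formula V_du_dx by metis

lemma S_x_zero_u: "m > 4 \<Longrightarrow> P \<in> V m p 0 \<Longrightarrow> S_x m p 0 P = 0"
  using S_x_formula(1)[of m P p 0] x_du_deg0[of P m p] du_dx_deg0_u[of P m p] by (simp add: V_def)
lemma S_u_zero_x: "m > 4 \<Longrightarrow> P \<in> V m 0 q \<Longrightarrow> S_u m 0 q P = 0"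
  using S_u_formula(1)[of m P 0 q] u_dx_deg0[of P m q] du_dx_deg0_x[of P m q] by (simp add: V_def)

lemma Pspace_normx2': "F \<in> Pspace m (p - 1) q \<Longrightarrow> (p = 0 \<Longrightarrow> F = 0) \<Longrightarrow> normx2 m * F \<in> Pspace m (Suc p) q"
  by (cases p) (auto dest: Pspace_normx2)
lemma Pspace_normu2': "F \<in> Pspace m p (q - 1) \<Longrightarrow> (q = 0 \<Longrightarrow> F = 0) \<Longrightarrow> normu2 m * F \<in> Pspace m p (Suc q)"
  by (cases q) (auto dest: Pspace_normu2)

lemma Lap_x_normx2_P: "R \<in> Pspace m p q \<Longrightarrow> Lap_x m R = 0 \<Longrightarrow> Lap_x m (normx2 m * R) = scal (2 * of_nat m + 4 * of_nat p) R"
  unfolding Lap_x_normx2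
  by (simp only: Ex_Pspace mult.assoc, simp only: of_nat_scal, simp only: num_scal scal_scal scal_add_left, simp add: algebra_simps)
lemma Lap_u_normu2_P: "R \<in> Pspace m p q \<Longrightarrow> Lap_u m R = 0 \<Longrightarrow> Lap_u m (normu2 m * R) = scal (2 * of_nat m + 4 * of_nat q) R"
  unfolding Lap_u_normu2
  by (simp only: Eu_Pspace mult.assoc, simp only: of_nat_scal, simp only: num_scal scal_scal scal_add_left, simp add: algebra_simps)

lemma C_props:
  assumes m: "m > 4" and P: "P \<in> V m p q"
  shows "C_op m p q P \<in> V m (Suc p) (Suc q)"
    and "Q \<in> harm m \<Longrightarrow> fischer (C_op m p q P) Q = fischer (ux m * P) Q"
proof -
  define a where "a = complex_of_real (cf m p)"
  define b where "b = complex_of_real (cf m q)"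
  define R where "R = du_dx m P"
  define SU where "SU = S_u m p q P"
  define SX where "SX = S_x m p q P"
  define X1 where "X1 = scal a SU"
  define X2 where "X2 = scal b SX"
  define X3 where "X3 = scal (a * b) R"
  define H where "H = ux m * P - normx2 m * X1 - normu2 m * X2 - normx2 m * (normu2 m * X3)"
  have Ph: "Lap_x m P = 0" "Lap_u m P = 0" and Pp: "P \<in> Pspace m p q" using P by (auto simp: V_def harm_def)
  have RV: "R \<in> V m (p - 1) (q - 1)" unfolding R_def by (rule V_du_dx[OF P])
  have SUf: "SU = u_dx m P - normu2 m * scal b R" unfolding SU_def b_def R_def by (rule S_u_formula(1)[OF m P])
  have SXf: "SX = x_du m P - normx2 m * scal a R" unfolding SX_def a_def R_def by (rule S_x_formula(1)[OF m P])
  have SUV: "SU \<in> V m (p - 1) (Suc q)" unfolding SU_def by (rule S_u_V[OF m P])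
  have SXV: "SX \<in> V m (Suc p) (q - 1)" unfolding SX_def by (rule S_x_V[OF m P])
  have X1V: "X1 \<in> V m (p - 1) (Suc q)" unfolding X1_def by (rule V_scal[OF SUV])
  have X2V: "X2 \<in> V m (Suc p) (q - 1)" unfolding X2_def by (rule V_scal[OF SXV])
  have X3V: "X3 \<in> V m (p - 1) (q - 1)" unfolding X3_def by (rule V_scal[OF RV])
  have p0: "X1 = 0 \<and> X3 = 0" if "p = 0"
    using that Pp S_u_zero_x[OF m] P du_dx_deg0_x by (simp add: X1_def X3_def SU_def R_def)
  have q0: "X2 = 0 \<and> X3 = 0" if "q = 0"
    using that Pp S_x_zero_u[OF m] P du_dx_deg0_u by (simp add: X2_def X3_def SX_def R_def)
  have X3u: "normu2 m * X3 \<in> Pspace m (p - 1) (Suc q)"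
    using X3V q0 by (intro Pspace_normu2') (auto simp: V_def)
  have LxX3: "Lap_x m (normu2 m * X3) = 0" using X3V by (simp add: Lap_x_normu2 V_def harmD)
  have LuX3: "Lap_u m (normx2 m * X3) = 0" using X3V by (simp add: Lap_u_normx2 V_def harmD)
  have X3x: "normx2 m * X3 \<in> Pspace m (Suc p) (q - 1)"
    using X3V p0 by (intro Pspace_normx2') (auto simp: V_def)
  have lx: "Lap_x m H = 0"
  proof (cases "p = 0")
    case True
    have "u_dx m P = 0" using True Pp u_dx_deg0 by simp
    then show ?thesis using p0[OF True] X2V Ph
      by (simp add: H_def Lap_x_diff Lap_x_ux Lap_x_normu2 V_def harmD)
  next
    case False
    then have p1: "1 \<le> p" by simp
    have e1: "(2 * of_nat m + 4 * of_nat (p - 1)) * a = 2" unfolding a_def by (rule cf_eq[OF m p1])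
    have e2: "(2 * of_nat m + 4 * of_nat (p - 1)) * (a * b) = 2 * b" by (metis e1 mult.assoc)
    have t1: "Lap_x m (normx2 m * X1) = scal 2 SU"
    proof -
      have "Lap_x m (normx2 m * X1) = scal (2 * of_nat m + 4 * of_nat (p - 1)) X1"
        using X1V by (intro Lap_x_normx2_P) (auto simp: V_def harmD)
      also have "\<dots> = scal 2 SU" unfolding X1_def scal_scal e1 ..
      finally show ?thesis .
    qed
    have t2: "Lap_x m (normx2 m * (normu2 m * X3)) = normu2 m * scal (2 * b) R"
    proof -
      have "Lap_x m (normx2 m * (normu2 m * X3)) = scal (2 * of_nat m + 4 * of_nat (p - 1)) (normu2 m * X3)"
        using X3u LxX3 by (rule Lap_x_normx2_P)
      also have "\<dots> = normu2 m * scal (2 * b) R" unfolding X3_def scal_mult scal_scal e2 ..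
      finally show ?thesis .
    qed
    have t3: "Lap_x m (normu2 m * X2) = 0" using X2V by (simp add: Lap_x_normu2 V_def harmD)
    show ?thesis unfolding H_def Lap_x_diff t1 t2 t3 Lap_x_ux
      using Ph by (simp add: SUf scal_diff scal_mult num_scal)
  qed
  have lu: "Lap_u m H = 0"
  proof (cases "q = 0")
    case True
    have "x_du m P = 0" using True Pp x_du_deg0 by simp
    then show ?thesis using q0[OF True] X1V Ph
      by (simp add: H_def Lap_u_diff Lap_u_ux Lap_u_normx2 V_def harmD)
  next
    case False
    then have q1: "1 \<le> q" by simp
    have e1: "(2 * of_nat m + 4 * of_nat (q - 1)) * b = 2" unfolding b_def by (rule cf_eq[OF m q1])
    have e2: "(2 * of_nat m + 4 * of_nat (q - 1)) * (a * b) = 2 * a" by (metis e1 mult.assoc mult.commute)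
    have t1: "Lap_u m (normu2 m * X2) = scal 2 SX"
    proof -
      have "Lap_u m (normu2 m * X2) = scal (2 * of_nat m + 4 * of_nat (q - 1)) X2"
        using X2V by (intro Lap_u_normu2_P) (auto simp: V_def harmD)
      also have "\<dots> = scal 2 SX" unfolding X2_def scal_scal e1 ..
      finally show ?thesis .
    qed
    have t2: "Lap_u m (normx2 m * (normu2 m * X3)) = normx2 m * scal (2 * a) R"
    proof -
      have "Lap_u m (normx2 m * (normu2 m * X3)) = Lap_u m (normu2 m * (normx2 m * X3))"
        by (metis mult.left_commute)
      also have "\<dots> = scal (2 * of_nat m + 4 * of_nat (q - 1)) (normx2 m * X3)"
        using X3x LuX3 by (rule Lap_u_normu2_P)
      also have "\<dots> = normx2 m * scal (2 * a) R" unfolding X3_def scal_mult scal_scal e2 ..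
      finally show ?thesis .
    qed
    have t3: "Lap_u m (normx2 m * X1) = 0" using X1V by (simp add: Lap_u_normx2 V_def harmD)
    show ?thesis unfolding H_def Lap_u_diff t1 t2 t3 Lap_u_ux
      using Ph by (simp add: SXf scal_diff scal_mult num_scal)
  qed
  have Hp: "H \<in> Pspace m (Suc p) (Suc q)"
  proof -
    have "ux m * P \<in> Pspace m (Suc p) (Suc q)" using Pp by (rule Pspace_ux)
    moreover have "normx2 m * X1 \<in> Pspace m (Suc p) (Suc q)"
      using X1V p0 by (intro Pspace_normx2') (auto simp: V_def)
    moreover have "normu2 m * X2 \<in> Pspace m (Suc p) (Suc q)"
      using X2V q0 by (intro Pspace_normu2') (auto simp: V_def)
    moreover have "normx2 m * (normu2 m * X3) \<in> Pspace m (Suc p) (Suc q)"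
      using X3u p0 by (intro Pspace_normx2') auto
    ultimately show ?thesis unfolding H_def by (intro Pspace_diff)
  qed
  have HV: "H \<in> V m (Suc p) (Suc q)" using Hp lx lu by (simp add: V_def harm_def)
  have CH: "C_op m p q P = H"
  proof -
    have "ux m * P = H + normx2 m * X1 + normu2 m * X2 + normx2 m * (normu2 m * X3)"
      by (simp add: H_def)
    then have "C_op m p q P = pi_s m (Suc p) (Suc q) (H + normx2 m * X1 + normu2 m * X2 + normx2 m * (normu2 m * X3))"
      by (simp add: C_op_def)
    also have "\<dots> = H"
      by (rule pi_s_char[OF HV]) (use X1V X2V X3V p0 q0 in auto)
    finally show ?thesis .
  qed
  show "C_op m p q P \<in> V m (Suc p) (Suc q)" using CH HV by simp
  show "fischer (C_op m p q P) Q = fischer (ux m * P) Q" if Q: "Q \<in> harm m"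
  proof -
    have "fischer (normx2 m * X1) Q = 0" "fischer (normu2 m * X2) Q = 0" "fischer (normx2 m * (normu2 m * X3)) Q = 0"
      using Q by (simp_all add: fischer_normx2_1 fischer_normu2_1 harmD)
    then show ?thesis unfolding CH H_def by (simp add: fischer_diff1)
  qed
qed

subsection \<open>Adjointness\<close>

lemma fischer_ux1: "fischer (ux m * P) Q = fischer P (du_dx m Q)"
proof -
  have "fischer (ux m * P) Q = (\<Sum>k<m. fischer P (pdiff k (pdiff (m+k) Q)))"
    unfolding ux_mult fischer_sum1 fischer_pvar1 ..
  also have "\<dots> = fischer P (du_dx m Q)"
    unfolding du_dx_def fischer_sum2 by (simp add: pdiff_comm)
  finally show ?thesis .
qed

lemma fischer_x_du1: "fischer (x_du m P) Q = fischer P (u_dx m Q)"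
proof -
  have "fischer (x_du m P) Q = (\<Sum>j<m. fischer (pdiff (m+j) P) (pdiff j Q))"
    unfolding x_du_def fischer_sum1 fischer_pvar1 ..
  also have "\<dots> = fischer P (u_dx m Q)"
    unfolding u_dx_def fischer_sum2 fischer_pvar2 ..
  finally show ?thesis .
qed

lemma adjC: assumes "m > 4" "P \<in> V m p q" "Q \<in> V m (Suc p) (Suc q)"
  shows "fischer (C_op m p q P) Q = fischer P (A_op m (Suc p) (Suc q) Q)"
  using assms by (simp add: C_props(2) V_def fischer_ux1 A_op_formula)

lemma adjSx: assumes m: "m > 4" and P: "P \<in> V m p q" and Q: "Q \<in> V m (Suc p) (q - 1)"
  shows "fischer (S_x m p q P) Q = fischer P (S_u m (Suc p) (q - 1) Q)"
proof -
  have Qh: "Lap_x m Q = 0" and Ph: "Lap_u m P = 0" using P Q by (auto simp: V_def harm_def)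
  have "fischer (S_x m p q P) Q = fischer (x_du m P) Q"
    unfolding S_x_formula(1)[OF m P] fischer_diff1 fischer_normx2_1 Qh by simp
  also have "\<dots> = fischer P (u_dx m Q)" by (rule fischer_x_du1)
  also have "\<dots> = fischer P (S_u m (Suc p) (q - 1) Q)"
    unfolding S_u_formula(1)[OF m Q] fischer_diff2 fischer_normu2_2 Ph by simp
  finally show ?thesis .
qed

lemma adjSu: assumes m: "m > 4" and Z: "Z \<in> V m p q" and W: "W \<in> V m (p - 1) (Suc q)" and p: "1 \<le> p"
  shows "fischer (S_u m p q Z) W = fischer Z (S_x m (p - 1) (Suc q) W)"
proof -
  have Z': "Z \<in> V m (Suc (p - 1)) (Suc q - 1)" using Z p by simp
  have "fischer (S_x m (p - 1) (Suc q) W) Z = fischer W (S_u m (Suc (p - 1)) (Suc q - 1) Z)"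
    by (rule adjSx[OF m W Z'])
  then have "fischer (S_x m (p - 1) (Suc q) W) Z = fischer W (S_u m p q Z)" using p by simp
  then show ?thesis by (metis fischer_conj)
qed

subsection \<open>Commutation of A and S_x\<close>

definition kap :: "nat \<Rightarrow> nat \<Rightarrow> real" where "kap m p = (real m + 2 * real p - 4) / (real m + 2 * real p - 2)"

lemma kap_eqs: assumes "m > 4" "1 \<le> p"
  shows "1 - 2 * complex_of_real (cf m p) = complex_of_real (kap m p)"
    and "complex_of_real (kap m p) * complex_of_real (cf m (p - 1)) = complex_of_real (cf m p)"
proof -
  have pos: "real m + 2 * real p - 2 > 0" "real m + 2 * real p - 4 > 0" using assms by auto
  have "1 - 2 * cf m p = kap m p" using pos by (simp add: cf_def kap_def field_simps)
  then show "1 - 2 * complex_of_real (cf m p) = complex_of_real (kap m p)"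
    by (metis of_real_1 of_real_diff of_real_mult of_real_numeral)
  have "kap m p * cf m (p - 1) = cf m p" using pos assms by (simp add: cf_def kap_def of_nat_diff field_simps)
  then show "complex_of_real (kap m p) * complex_of_real (cf m (p - 1)) = complex_of_real (cf m p)"
    by (metis of_real_mult)
qed

lemma comm1: assumes m: "m > 4" and P: "P \<in> V m p q" and p: "1 \<le> p"
  shows "A_op m (Suc p) (q - 1) (S_x m p q P) = scal (kap m p) (S_x m (p - 1) (q - 1) (A_op m p q P))"
proof -
  define a where "a = complex_of_real (cf m p)"
  define R where "R = du_dx m P"
  have RV: "R \<in> V m (p - 1) (q - 1)" unfolding R_def by (rule V_du_dx[OF P])
  have Ph: "Lap_u m P = 0" using P by (auto simp: V_def harm_def)
  have "A_op m (Suc p) (q - 1) (S_x m p q P) = du_dx m (S_x m p q P)"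
    by (rule A_op_formula[OF S_x_V[OF m P]])
  also have "\<dots> = x_du m R - scal (2 * a) (x_du m R) - normx2 m * scal a (du_dx m R)"
    unfolding S_x_formula(1)[OF m P] du_dx_diff du_dx_x_du du_dx_normx2 Ph
    by (simp add: a_def R_def du_dx_scal x_du_scal num_scal scal_add algebra_simps)
  also have "\<dots> = scal (kap m p) (x_du m R) - normx2 m * scal (kap m p * cf m (p - 1)) (du_dx m R)"
  proof -
    have e: "x_du m R - scal (2*a) (x_du m R) = scal (kap m p) (x_du m R)"
      by (metis scal_one scal_diff_left kap_eqs(1)[OF m p] a_def)
    show ?thesis using kap_eqs(2)[OF m p] e by (simp add: a_def)
  qed
  also have "\<dots> = scal (kap m p) (S_x m (p - 1) (q - 1) (A_op m p q P))"
    unfolding A_op_formula[OF P] S_x_formula(1)[OF m RV[unfolded R_def]]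
    by (simp add: R_def scal_diff scal_mult)
  finally show ?thesis .
qed

lemma A_scal: "W \<in> V m p q \<Longrightarrow> A_op m p q (scal c W) = scal c (A_op m p q W)"
  by (simp add: A_op_formula V_scal du_dx_scal)
lemma S_x_scal: "m > 4 \<Longrightarrow> W \<in> V m p q \<Longrightarrow> S_x m p q (scal c W) = scal c (S_x m p q W)"
  by (simp add: S_x_formula(1) V_scal du_dx_scal x_du_scal scal_diff scal_mult mult.commute[where 'a=complex])

lemma ops_of_zero [simp]: "A_op m p q 0 = 0" "S_u m p q 0 = 0" "C_op m p q 0 = 0" "S_x m p q 0 = 0"
  by (simp_all add: A_op_def S_u_def C_op_def S_x_def pi_s_id)

lemma pows_of_zero [simp]: "A_pow m n p q 0 = 0" "S_u_pow m n p q 0 = 0" "C_pow m n p q 0 = 0" "S_x_pow m n p q 0 = 0"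
  by (induction n) simp_all

lemma A_pow_front: "A_pow m (Suc n) p q X = A_pow m n (p - 1) (q - 1) (A_op m p q X)"
proof (induction n)
  case 0 show ?case by simp
next
  case (Suc n)
  have e: "p - Suc n = p - 1 - n" "q - Suc n = q - 1 - n" by arith+
  show ?case using Suc.IH by (simp only: A_pow.simps e)
qed
lemma S_x_pow_front: "S_x_pow m (Suc n) p q X = S_x_pow m n (Suc p) (q - 1) (S_x m p q X)"
proof (induction n)
  case 0 show ?case by simp
next
  case (Suc n)
  have e: "p + Suc n = Suc p + n" "q - Suc n = q - 1 - n" by arith+
  show ?case using Suc.IH by (simp only: S_x_pow.simps e)
qed

lemma V_S_x_pow: "m > 4 \<Longrightarrow> X \<in> V m p q \<Longrightarrow> S_x_pow m n p q X \<in> V m (p + n) (q - n)"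
proof (induction n)
  case (Suc n)
  then show ?case using S_x_V[OF Suc.prems(1) Suc.IH[OF Suc.prems]] by simp
qed simp
lemma V_S_u_pow: "m > 4 \<Longrightarrow> X \<in> V m p q \<Longrightarrow> S_u_pow m n p q X \<in> V m (p - n) (q + n)"
proof (induction n)
  case (Suc n)
  then show ?case using S_u_V[OF Suc.prems(1) Suc.IH[OF Suc.prems]] by simp
qed simp
lemma V_A_pow: "X \<in> V m p q \<Longrightarrow> A_pow m n p q X \<in> V m (p - n) (q - n)"
proof (induction n)
  case (Suc n)
  then show ?case using A_V[OF Suc.IH[OF Suc.prems]] by simp
qed simp
lemma V_C_pow: "m > 4 \<Longrightarrow> X \<in> V m p q \<Longrightarrow> C_pow m n p q X \<in> V m (p + n) (q + n)"
proof (induction n)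
  case (Suc n)
  then show ?case using C_props(1)[OF Suc.prems(1) Suc.IH[OF Suc.prems]] by simp
qed simp

lemma A_pow_zero: assumes "X \<in> V m p q" "q < i" shows "A_pow m i p q X = 0"
  using assms(2)
proof (induction i)
  case 0 then show ?case by simp
next
  case (Suc i)
  show ?case
  proof (cases "q < i")
    case True then show ?thesis using Suc.IH by simp
  next
    case False
    then have i: "i = q" using Suc.prems by simp
    have W: "A_pow m i p q X \<in> V m (p - q) 0" using V_A_pow[OF assms(1), of i] i by simp
    have "A_pow m (Suc i) p q X = A_op m (p - q) 0 (A_pow m i p q X)" using i by simp
    also have "\<dots> = 0"
    proof -
      have "A_pow m i p q X \<in> Pspace m (p - q) 0" using W by (simp add: V_def)
      then show ?thesis using W by (simp add: A_op_formula du_dx_deg0_u)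
    qed
    finally show ?thesis .
  qed
qed

lemma itC: assumes m: "m > 4" and Y: "Y \<in> V m p q"
  shows "Q \<in> V m (p + n) (q + n) \<Longrightarrow> fischer (C_pow m n p q Y) Q = fischer Y (A_pow m n (p + n) (q + n) Q)"
proof (induction n arbitrary: Q)
  case 0 then show ?case by simp
next
  case (Suc n)
  have W: "C_pow m n p q Y \<in> V m (p + n) (q + n)" by (rule V_C_pow[OF m Y])
  have Q: "Q \<in> V m (Suc (p + n)) (Suc (q + n))" using Suc.prems by simp
  have Q': "A_op m (Suc (p + n)) (Suc (q + n)) Q \<in> V m (p + n) (q + n)" using A_V[OF Q] by simp
  have "fischer (C_pow m (Suc n) p q Y) Q = fischer (C_pow m n p q Y) (A_op m (Suc (p + n)) (Suc (q + n)) Q)"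
    using adjC[OF m W Q] by simp
  also have "\<dots> = fischer Y (A_pow m n (p + n) (q + n) (A_op m (Suc (p + n)) (Suc (q + n)) Q))"
    by (rule Suc.IH[OF Q'])
  also have "\<dots> = fischer Y (A_pow m (Suc n) (p + Suc n) (q + Suc n) Q)"
    unfolding A_pow_front by simp
  finally show ?case .
qed

lemma itSu: assumes m: "m > 4" and Z: "Z \<in> V m p q"
  shows "n \<le> p \<Longrightarrow> W \<in> V m (p - n) (q + n) \<Longrightarrow> fischer (S_u_pow m n p q Z) W = fischer Z (S_x_pow m n (p - n) (q + n) W)"
proof (induction n arbitrary: W)
  case 0 then show ?case by simp
next
  case (Suc n)
  have Z': "S_u_pow m n p q Z \<in> V m (p - n) (q + n)" by (rule V_S_u_pow[OF m Z])
  have W: "W \<in> V m (p - n - 1) (Suc (q + n))" using Suc.prems by simp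
  have p1: "1 \<le> p - n" using Suc.prems by simp
  have e: "Suc (p - n - 1) = p - n" using p1 by arith
  have W': "S_x m (p - n - 1) (Suc (q + n)) W \<in> V m (p - n) (q + n)"
    using S_x_V[OF m W] unfolding e by simp
  have "fischer (S_u_pow m (Suc n) p q Z) W = fischer (S_u_pow m n p q Z) (S_x m (p - n - 1) (Suc (q + n)) W)"
    using adjSu[OF m Z' W p1] by simp
  also have "\<dots> = fischer Z (S_x_pow m n (p - n) (q + n) (S_x m (p - n - 1) (Suc (q + n)) W))"
    using Suc.IH[OF _ W'] Suc.prems by simp
  also have "\<dots> = fischer Z (S_x_pow m (Suc n) (p - Suc n) (q + Suc n) W)"
    unfolding S_x_pow_front using Suc.prems by (simp add: Suc_diff_Suc)
  finally show ?case .
qed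

lemma comm_iter1: assumes m: "m > 4" and X: "X \<in> V m p q" and p: "1 \<le> p"
  shows "A_op m (p + j) (q - j) (S_x_pow m j p q X) =
     scal (complex_of_real (\<Prod>t<j. kap m (p + t))) (S_x_pow m j (p - 1) (q - 1) (A_op m p q X))"
proof (induction j)
  case 0 then show ?case by simp
next
  case (Suc j)
  define Y where "Y = S_x_pow m j p q X"
  define c where "c = (\<Prod>t<j. kap m (p + t))"
  define W where "W = S_x_pow m j (p - 1) (q - 1) (A_op m p q X)"
  have YV: "Y \<in> V m (p + j) (q - j)" unfolding Y_def by (rule V_S_x_pow[OF m X])
  have WV0: "W \<in> V m (p - 1 + j) (q - 1 - j)" unfolding W_def by (rule V_S_x_pow[OF m A_V[OF X]])
  have e1: "p - 1 + j = p + j - 1" "q - 1 - j = q - j - 1" using p by arith+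
  have WV: "W \<in> V m (p + j - 1) (q - j - 1)" using WV0 unfolding e1 .
  have e2: "p + Suc j = Suc (p + j)" "q - Suc j = q - j - 1" by arith+
  have s1: "A_op m (p + j) (q - j) Y = scal (complex_of_real c) W"
    using Suc.IH by (simp add: Y_def c_def W_def)
  have s2: "S_x m (p + j - 1) (q - j - 1) (scal (complex_of_real c) W) = scal (complex_of_real c) (S_x m (p + j - 1) (q - j - 1) W)"
    by (rule S_x_scal[OF m WV])
  have s3: "S_x m (p + j - 1) (q - j - 1) W = S_x_pow m (Suc j) (p - 1) (q - 1) (A_op m p q X)"
    unfolding e1[symmetric] by (simp add: W_def)
  have "A_op m (p + Suc j) (q - Suc j) (S_x_pow m (Suc j) p q X) = A_op m (Suc (p + j)) (q - j - 1) (S_x m (p + j) (q - j) Y)"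
    unfolding e2 by (simp add: Y_def)
  also have "\<dots> = scal (kap m (p + j)) (S_x m (p + j - 1) (q - j - 1) (A_op m (p + j) (q - j) Y))"
    using comm1[OF m YV] p by simp
  also have "\<dots> = scal (kap m (p + j)) (scal (complex_of_real c) (S_x_pow m (Suc j) (p - 1) (q - 1) (A_op m p q X)))"
    unfolding s1 s2 s3 ..
  also have "\<dots> = scal (complex_of_real (\<Prod>t<Suc j. kap m (p + t))) (S_x_pow m (Suc j) (p - 1) (q - 1) (A_op m p q X))"
    unfolding scal_scal c_def by (simp only: prod.lessThan_Suc of_real_mult mult.commute)
  finally show ?case .
qed

lemma comm_iter: assumes m: "m > 4" and X: "X \<in> V m p q"
  shows "i \<le> p \<Longrightarrow> A_pow m i (p + j) (q - j) (S_x_pow m j p q X) =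
     scal (complex_of_real (\<Prod>s<i. \<Prod>t<j. kap m (p - s + t))) (S_x_pow m j (p - i) (q - i) (A_pow m i p q X))"
proof (induction i)
  case 0 then show ?case by simp
next
  case (Suc i)
  define g where "g = (\<Prod>s<i. \<Prod>t<j. kap m (p - s + t))"
  define W where "W = A_pow m i p q X"
  have WV: "W \<in> V m (p - i) (q - i)" unfolding W_def by (rule V_A_pow[OF X])
  have p1: "1 \<le> p - i" using Suc.prems by simp
  have SW: "S_x_pow m j (p - i) (q - i) W \<in> V m (p - i + j) (q - i - j)" by (rule V_S_x_pow[OF m WV])
  have e: "p + j - i = p - i + j" "q - j - i = q - i - j" using Suc.prems by arith+
  have s0: "A_pow m (Suc i) (p + j) (q - j) (S_x_pow m j p q X) =
     A_op m (p - i + j) (q - i - j) (A_pow m i (p + j) (q - j) (S_x_pow m j p q X))"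
    by (simp only: A_pow.simps e)
  have s1: "A_pow m i (p + j) (q - j) (S_x_pow m j p q X) = scal (complex_of_real g) (S_x_pow m j (p - i) (q - i) W)"
    using Suc.IH Suc.prems by (simp add: g_def W_def)
  have s2: "A_op m (p - i + j) (q - i - j) (scal (complex_of_real g) (S_x_pow m j (p - i) (q - i) W)) =
      scal (complex_of_real g) (A_op m (p - i + j) (q - i - j) (S_x_pow m j (p - i) (q - i) W))"
    by (rule A_scal[OF SW])
  have s3: "A_op m (p - i + j) (q - i - j) (S_x_pow m j (p - i) (q - i) W) =
      scal (complex_of_real (\<Prod>t<j. kap m (p - i + t))) (S_x_pow m j (p - i - 1) (q - i - 1) (A_op m (p - i) (q - i) W))"
    by (rule comm_iter1[OF m WV p1])
  have s4: "S_x_pow m j (p - i - 1) (q - i - 1) (A_op m (p - i) (q - i) W) = S_x_pow m j (p - Suc i) (q - Suc i) (A_pow m (Suc i) p q X)"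
    by (simp add: W_def)
  have "A_pow m (Suc i) (p + j) (q - j) (S_x_pow m j p q X) =
     scal (complex_of_real g) (scal (complex_of_real (\<Prod>t<j. kap m (p - i + t))) (S_x_pow m j (p - Suc i) (q - Suc i) (A_pow m (Suc i) p q X)))"
    unfolding s0 s1 s2 s3 s4 ..
  also have "\<dots> = scal (complex_of_real (\<Prod>s<Suc i. \<Prod>t<j. kap m (p - s + t))) (S_x_pow m j (p - Suc i) (q - Suc i) (A_pow m (Suc i) p q X))"
    unfolding scal_scal g_def by (simp only: prod.lessThan_Suc of_real_mult)
  finally show ?case .
qed

definition Tij :: "nat \<Rightarrow> nat \<Rightarrow> nat \<Rightarrow> nat \<Rightarrow> nat \<Rightarrow> cpoly \<Rightarrow> cpoly" where
  "Tij m k l i j X = C_pow m i (k-i) (l-i) (S_u_pow m j (k+j-i) (l-j-i) (A_pow m i (k+j) (l-j) (S_x_pow m j k l X)))"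

lemma Tij_form: assumes m: "m > 4" and kl: "l \<le> k" "i + j \<le> l" and X: "X \<in> V m k l" and Y: "Y \<in> V m k l"
  shows "fischer (Tij m k l i j X) Y =
    complex_of_real (\<Prod>s<i. \<Prod>t<j. kap m (k - s + t)) *
    fischer (S_x_pow m j (k - i) (l - i) (A_pow m i k l X)) (S_x_pow m j (k - i) (l - i) (A_pow m i k l Y))"
proof -
  let ?g = "complex_of_real (\<Prod>s<i. \<Prod>t<j. kap m (k - s + t))"
  define Z where "Z = A_pow m i (k+j) (l-j) (S_x_pow m j k l X)"
  have ik: "i \<le> k" using kl by simp
  have ZV0: "Z \<in> V m (k + j - i) (l - j - i)" unfolding Z_def by (rule V_A_pow[OF V_S_x_pow[OF m X]])
  have YV: "S_u_pow m j (k+j-i) (l-j-i) Z \<in> V m (k - i) (l - i)"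
  proof -
    have "S_u_pow m j (k+j-i) (l-j-i) Z \<in> V m (k + j - i - j) (l - j - i + j)" by (rule V_S_u_pow[OF m ZV0])
    moreover have "k + j - i - j = k - i" "l - j - i + j = l - i" using kl by arith+
    ultimately show ?thesis by simp
  qed
  have Y': "Y \<in> V m (k - i + i) (l - i + i)" using Y kl by simp
  have AY: "A_pow m i k l Y \<in> V m (k + j - i - j) (l - j - i + j)"
  proof -
    have "k + j - i - j = k - i" "l - j - i + j = l - i" using kl by arith+
    then show ?thesis using V_A_pow[OF Y, of i] by simp
  qed
  have "fischer (Tij m k l i j X) Y = fischer (S_u_pow m j (k+j-i) (l-j-i) Z) (A_pow m i (k - i + i) (l - i + i) Y)"
    unfolding Tij_def Z_def[symmetric] by (rule itC[OF m YV Y'])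
  also have "\<dots> = fischer (S_u_pow m j (k+j-i) (l-j-i) Z) (A_pow m i k l Y)" using kl by simp
  also have "\<dots> = fischer Z (S_x_pow m j (k + j - i - j) (l - j - i + j) (A_pow m i k l Y))"
    by (rule itSu[OF m ZV0 _ AY]) (use ik in arith)
  also have "\<dots> = fischer Z (S_x_pow m j (k - i) (l - i) (A_pow m i k l Y))"
  proof -
    have "k + j - i - j = k - i" "l - j - i + j = l - i" using kl by arith+
    then show ?thesis by simp
  qed
  also have "Z = scal ?g (S_x_pow m j (k - i) (l - i) (A_pow m i k l X))"
    unfolding Z_def by (rule comm_iter[OF m X ik])
  finally show ?thesis by (simp add: fischer_scal1)
qed

lemma Tij_zero: assumes m: "m > 4" and "j \<le> l" "l < i + j" and X: "X \<in> V m k l"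
  shows "Tij m k l i j X = 0"
proof -
  have "A_pow m i (k+j) (l-j) (S_x_pow m j k l X) = 0"
    by (rule A_pow_zero[OF V_S_x_pow[OF m X]]) (use assms in arith)
  then show ?thesis by (simp add: Tij_def)
qed

lemma Tij_selfadj: assumes m: "m > 4" and kl: "l \<le> k" "i \<le> l" "j \<le> l" and P: "P \<in> V m k l" and Q: "Q \<in> V m k l"
  shows "fischer (Tij m k l i j P) Q = fischer P (Tij m k l i j Q)"
proof (cases "i + j \<le> l")
  case True
  let ?g = "complex_of_real (\<Prod>s<i. \<Prod>t<j. kap m (k - s + t))"
  let ?G = "\<lambda>X. S_x_pow m j (k - i) (l - i) (A_pow m i k l X)"
  have "fischer P (Tij m k l i j Q) = cnj (fischer (Tij m k l i j Q) P)" by (rule fischer_conj)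
  also have "\<dots> = cnj (?g * fischer (?G Q) (?G P))" using Tij_form[OF m kl(1) True Q P] by simp
  also have "\<dots> = ?g * fischer (?G P) (?G Q)" by (subst (2) fischer_conj) simp
  also have "\<dots> = fischer (Tij m k l i j P) Q" using Tij_form[OF m kl(1) True P Q] by simp
  finally show ?thesis ..
next
  case False
  then show ?thesis using Tij_zero[OF m kl(3) _ P] Tij_zero[OF m kl(3) _ Q] by simp
qed

theorem theorem6p1:
  fixes m k l :: nat
  assumes "m > 4" and "k \<ge> l"
    and "P \<in> Pspace m k l \<inter> harm m" and "Q \<in> Pspace m k l \<inter> harm m"
  shows "fischer (Proj m k l P) Q = fischer P (Proj m k l Q)"
proof -
  have P: "P \<in> V m k l" and Q: "Q \<in> V m k l" using assms by (simp_all add: V_def)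
  have Pr: "Proj m k l X = (\<Sum>i\<le>l. \<Sum>j\<le>l. scal (complex_of_real (beta m k l i j)) (Tij m k l i j X))" for X
    unfolding Proj_def Tij_def scal_def ..
  have "fischer (Proj m k l P) Q = (\<Sum>i\<le>l. \<Sum>j\<le>l. complex_of_real (beta m k l i j) * fischer (Tij m k l i j P) Q)"
    unfolding Pr fischer_sum1 fischer_scal1 by simp
  also have "\<dots> = (\<Sum>i\<le>l. \<Sum>j\<le>l. complex_of_real (beta m k l i j) * fischer P (Tij m k l i j Q))"
    by (intro sum.cong refl) (simp add: Tij_selfadj[OF assms(1) assms(2) _ _ P Q])
  also have "\<dots> = fischer P (Proj m k l Q)"
    unfolding Pr fischer_sum2 fischer_scal2 ..
  finally show ?thesis .
qed

end
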